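(* Let $X\in\{F,A\}$. For every state $\rho^{ab}$ on $\mathcal H_a\otimes\mathcal H_b$, $C^a_{X,cc}(\rho^{ab})\ge D^a_X(\rho^{ab})$. Equality holds if $\rho^a=\mathrm{Tr}_b\rho^{ab}=I^a/n_a$ (with $n_a=\dim\mathcal H_a$), or if $\rho^{ab}$ is a pure state.
   Context: $F(\rho,\sigma)=\mathrm{Tr}\sqrt{\sqrt\sigma\rho\sqrt\sigma}$, $A(\rho,\sigma)=\mathrm{Tr}(\sqrt\rho\sqrt\sigma)$, $d_X=1-X^2$. For an orthonormal basis $\mathcal B=\{|\alpha_i\rangle\}$ of $\mathcal H_a$, let $C^a_X(\rho^{ab};\mathcal B)=\min d_X(\rho^{ab},\sigma)$ over states $\sigma=\sum_ip_i|\alpha_i\rangle\langle\alpha_i|\otimes\sigma_i$. The correlated coherence is $C^a_{X,cc}(\rho^{ab})=\min_{\mathcal B}C^a_X(\rho^{ab};\mathcal B)$, the minimum over orthonormal bases $\mathcal B$ of $\mathcal H_a$ consisting of eigenvectors of $\rho^a$ (equivalently, bases in which $\rho^a$ has zero coherence). The discord-type quantity is $D^a_X(\rho^{ab})=\min d_X(\rho^{ab},\sigma)$ over all classical-quantum states $\sigma=\sum_ip_i|\alpha_i\rangle\langle\alpha_i|\otimes\sigma_i$ with $\{|\alpha_i\rangle\}$ any orthonormal basis of $\mathcal H_a$ (i.e. the minimum of $C^a_X(\rho^{ab};\mathcal B)$ over all orthonormal bases $\mathcal B$). *)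

theory Defs
  imports "HOL-Analysis.Analysis"
begin

text \<open>The Hilbert space H_a has orthonormal standard basis indexed by the finite type 'a,
  so n_a = CARD('a); H_a \<otimes> H_b is indexed by 'a \<times> 'b.\<close>

type_synonym 'n cmat = "complex ^ 'n ^ 'n"

definition cinner :: "complex ^ 'n::finite \<Rightarrow> complex ^ 'n \<Rightarrow> complex" where
  "cinner u v = (\<Sum>i\<in>UNIV. cnj (u $ i) * v $ i)"

definition adjoint :: "'n::finite cmat \<Rightarrow> 'n cmat" where
  "adjoint A = (\<chi> i j. cnj (A $ j $ i))"

definition ctrace :: "'n::finite cmat \<Rightarrow> complex" where
  "ctrace A = (\<Sum>i\<in>UNIV. A $ i $ i)"

definition psd :: "'n::finite cmat \<Rightarrow> bool" where
  "psd A \<longleftrightarrow> adjoint A = A \<and> (\<forall>v. cinner v (A *v v) \<in> \<real> \<and> 0 \<le> Re (cinner v (A *v v)))"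

definition density :: "'n::finite cmat \<Rightarrow> bool" where
  "density A \<longleftrightarrow> psd A \<and> ctrace A = 1"

definition msqrt :: "'n::finite cmat \<Rightarrow> 'n cmat" where
  "msqrt A = (THE B. psd B \<and> B ** B = A)"

definition outer :: "complex ^ 'n::finite \<Rightarrow> complex ^ 'n \<Rightarrow> 'n cmat" where
  "outer u v = (\<chi> i j. u $ i * cnj (v $ j))"

definition kron :: "'a::finite cmat \<Rightarrow> 'b::finite cmat \<Rightarrow> ('a \<times> 'b) cmat" where
  "kron A B = (\<chi> p q. A $ fst p $ fst q * B $ snd p $ snd q)"

definition ptrace_b :: "('a::finite \<times> 'b::finite) cmat \<Rightarrow> 'a cmat" where
  "ptrace_b R = (\<chi> i i'. \<Sum>j\<in>UNIV. R $ (i, j) $ (i', j))"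

definition fidelity :: "'n::finite cmat \<Rightarrow> 'n cmat \<Rightarrow> real" where
  "fidelity \<rho> \<sigma> = Re (ctrace (msqrt (msqrt \<sigma> ** \<rho> ** msqrt \<sigma>)))"

definition affinity :: "'n::finite cmat \<Rightarrow> 'n cmat \<Rightarrow> real" where
  "affinity \<rho> \<sigma> = Re (ctrace (msqrt \<rho> ** msqrt \<sigma>))"

definition dX :: "('n cmat \<Rightarrow> 'n cmat \<Rightarrow> real) \<Rightarrow> 'n cmat \<Rightarrow> 'n cmat \<Rightarrow> real" where
  "dX X \<rho> \<sigma> = 1 - (X \<rho> \<sigma>)\<^sup>2"

text \<open>Orthonormal basis of H_a, indexed by 'a (hence exactly n_a vectors).\<close>
definition onb :: "('a::finite \<Rightarrow> complex ^ 'a) \<Rightarrow> bool" where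
  "onb \<alpha> \<longleftrightarrow> (\<forall>i j. cinner (\<alpha> i) (\<alpha> j) = (if i = j then 1 else 0))"

definition cq_states :: "('a::finite \<Rightarrow> complex ^ 'a) \<Rightarrow> ('a \<times> 'b::finite) cmat set" where
  "cq_states \<alpha> = {\<sigma>. \<exists>p \<tau>. (\<forall>i. 0 \<le> p i) \<and> (\<Sum>i\<in>UNIV. p i) = 1 \<and> (\<forall>i. density (\<tau> i)) \<and>
      \<sigma> = (\<Sum>i\<in>UNIV. p i *\<^sub>R kron (outer (\<alpha> i) (\<alpha> i)) (\<tau> i))}"

definition C_basis :: "(('a \<times> 'b) cmat \<Rightarrow> ('a \<times> 'b) cmat \<Rightarrow> real) \<Rightarrow> ('a::finite \<Rightarrow> complex ^ 'a)
    \<Rightarrow> ('a \<times> 'b::finite) cmat \<Rightarrow> real" where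
  "C_basis X \<alpha> \<rho> = (INF \<sigma>\<in>cq_states \<alpha>. dX X \<rho> \<sigma>)"

definition eigen_onb :: "'a::finite cmat \<Rightarrow> ('a \<Rightarrow> complex ^ 'a) \<Rightarrow> bool" where
  "eigen_onb A \<alpha> \<longleftrightarrow> onb \<alpha> \<and> (\<forall>i. \<exists>c::complex. A *v \<alpha> i = (\<chi> k. c * \<alpha> i $ k))"

definition C_cc :: "(('a \<times> 'b) cmat \<Rightarrow> ('a \<times> 'b) cmat \<Rightarrow> real) \<Rightarrow> ('a::finite \<times> 'b::finite) cmat \<Rightarrow> real" where
  "C_cc X \<rho> = (INF \<alpha>\<in>{\<alpha>. eigen_onb (ptrace_b \<rho>) \<alpha>}. C_basis X \<alpha> \<rho>)"

definition D_disc :: "(('a \<times> 'b) cmat \<Rightarrow> ('a \<times> 'b) cmat \<Rightarrow> real) \<Rightarrow> ('a::finite \<times> 'b::finite) cmat \<Rightarrow> real" where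
  "D_disc X \<rho> = (INF \<sigma>\<in>(\<Union>\<alpha>\<in>{\<alpha>. onb \<alpha>}. cq_states \<alpha>). dX X \<rho> \<sigma>)"

definition pure_state :: "'n::finite cmat \<Rightarrow> bool" where
  "pure_state \<rho> \<longleftrightarrow> (\<exists>\<psi>. cinner \<psi> \<psi> = 1 \<and> \<rho> = outer \<psi> \<psi>)"

end

theory Submission
  imports Defs
begin


lemma sR_cpx[simp]: "r *\<^sub>R (z::complex) = of_real r * z"
  by (simp add: scaleR_conv_of_real)
lemma sR_vec[simp]: "(r *\<^sub>R (x::complex^'n))$i = of_real r * x$i"
  unfolding vector_scaleR_component by (simp add: scaleR_conv_of_real)
lemma sR_mat[simp]: "(r *\<^sub>R (A::complex^'n^'m))$i$j = of_real r * A$i$j"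
  unfolding vector_scaleR_component by (simp add: scaleR_conv_of_real)

lemma cinner_add_right: "cinner u (v + w) = cinner u v + cinner u w"
  by (simp add: cinner_def sum.distrib algebra_simps)
lemma cinner_add_left: "cinner (u + v) w = cinner u w + cinner v w"
  by (simp add: cinner_def sum.distrib algebra_simps)
lemma cinner_diff_right: "cinner u (v - w) = cinner u v - cinner u w"
  by (simp add: cinner_def sum_subtractf algebra_simps)
lemma cinner_diff_left: "cinner (u - v) w = cinner u w - cinner v w"
  by (simp add: cinner_def sum_subtractf algebra_simps)
lemma cinner_scale_right: "cinner u (c *s v) = c * cinner u v"
  by (simp add: cinner_def sum_distrib_left algebra_simps)
lemma cinner_scale_left: "cinner (c *s u) v = cnj c * cinner u v"
  by (simp add: cinner_def sum_distrib_left algebra_simps)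
lemma cinner_scaleR_right: "cinner u (r *\<^sub>R v) = of_real r * cinner u v"
  by (simp add: cinner_def sum_distrib_left algebra_simps )
lemma cinner_scaleR_left: "cinner (r *\<^sub>R u) v = of_real r * cinner u v"
  by (simp add: cinner_def sum_distrib_left algebra_simps )
lemma cinner_sum_right: "cinner u (sum f S) = (\<Sum>x\<in>S. cinner u (f x))"
  by (simp add: cinner_def sum_component sum_distrib_left) (rule sum.swap)
lemma cinner_sum_left: "cinner (sum f S) v = (\<Sum>x\<in>S. cinner (f x) v)"
  by (simp add: cinner_def sum_component sum_distrib_right cnj_sum) (rule sum.swap)
lemma cinner_zero_right[simp]: "cinner u 0 = 0" and cinner_zero_left[simp]: "cinner 0 u = 0"
  by (simp_all add: cinner_def)
lemma cinner_commute: "cinner v u = cnj (cinner u v)"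
  by (simp add: cinner_def cnj_sum mult.commute)
lemma cinner_adjoint: "cinner u (A *v v) = cinner (adjoint A *v u) v"
  by (simp add: cinner_def adjoint_def matrix_vector_mult_def sum_distrib_left sum_distrib_right cnj_sum algebra_simps)
     (rule sum.swap)
lemma cinner_self: "cinner v v = of_real (\<Sum>i\<in>UNIV. (cmod (v$i))^2)"
  unfolding cinner_def of_real_sum by (rule sum.cong) (simp_all only: complex_norm_square mult.commute)
lemma cinner_self_Re: "Re (cinner v v) = (\<Sum>i\<in>UNIV. (cmod (v$i))^2)"
  by (simp add: cinner_self)
lemma cinner_self_real: "of_real (Re (cinner v v)) = cinner v v"
  by (simp add: cinner_self)
lemma cinner_self_nonneg: "0 \<le> Re (cinner v v)"
  by (simp add: cinner_self_Re sum_nonneg)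
lemma cinner_self_eq0: "cinner v v = 0 \<longleftrightarrow> v = 0"
proof
  assume "cinner v v = 0"
  then have "(\<Sum>i\<in>UNIV. (cmod (v$i))^2) = 0" by (metis cinner_self_Re zero_complex.simps(1))
  then have "\<forall>i\<in>UNIV. (cmod (v$i))^2 = 0" by (subst (asm) sum_nonneg_eq_0_iff) auto
  then show "v = 0" by (simp add: vec_eq_iff)
qed simp
lemma cinner_self_Re_eq0: "Re (cinner v v) = 0 \<longleftrightarrow> v = 0"
  by (metis cinner_self_eq0 cinner_self_real of_real_0 zero_complex.simps(1))

lemma adjoint_adjoint[simp]: "adjoint (adjoint A) = A"
  by (simp add: adjoint_def vec_eq_iff)
lemma adjoint_mult: "adjoint (A ** B) = adjoint B ** adjoint A"
  by (simp add: adjoint_def matrix_matrix_mult_def vec_eq_iff cnj_sum mult.commute)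
lemma adjoint_add: "adjoint (A + B) = adjoint A + adjoint B"
  by (simp add: adjoint_def vec_eq_iff)
lemma adjoint_scaleR: "adjoint (r *\<^sub>R A) = r *\<^sub>R adjoint A"
  by (simp add: adjoint_def vec_eq_iff )
lemma adjoint_sum: "adjoint (sum f S) = (\<Sum>x\<in>S. adjoint (f x))"
  by (simp add: adjoint_def vec_eq_iff sum_component cnj_sum)
lemma adjoint_mat1: "adjoint (mat 1) = mat 1"
  by (simp add: adjoint_def vec_eq_iff mat_def)

lemma outer_mult_vec: "outer u v *v w = cinner v w *s u"
  by (simp add: outer_def cinner_def matrix_vector_mult_def vec_eq_iff vector_scalar_mult_def sum_distrib_left algebra_simps)
lemma outer_mult_left: "outer u v ** B = outer u (adjoint B *v v)"
  unfolding outer_def adjoint_def matrix_matrix_mult_def matrix_vector_mult_def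
  by (simp add: vec_eq_iff sum_distrib_left cnj_sum mult_ac)
lemma outer_mult_right: "(B::complex^_^_) ** outer u v = outer (B *v u) v"
  unfolding outer_def matrix_matrix_mult_def matrix_vector_mult_def
  apply (simp add: vec_eq_iff)
  apply (intro allI, subst sum_distrib_right, rule sum.cong, simp_all add: mult_ac)
  done
lemma outer_outer: "outer u v ** outer w x = outer (cinner v w *s u) x"
  by (simp add: outer_mult_right outer_mult_vec)
lemma adjoint_outer: "adjoint (outer u v) = outer v u"
  by (simp add: adjoint_def outer_def vec_eq_iff)
lemma ctrace_outer: "ctrace (outer u v) = cinner v u"
  by (simp add: ctrace_def outer_def cinner_def mult.commute)
lemma ctrace_comm: "ctrace (A ** B) = ctrace (B ** A)"
  by (simp add: ctrace_def matrix_matrix_mult_def mult.commute) (rule sum.swap)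
lemma ctrace_add: "ctrace (A + B) = ctrace A + ctrace B"
  by (simp add: ctrace_def sum.distrib)
lemma ctrace_scaleR: "ctrace (r *\<^sub>R A) = of_real r * ctrace A"
  by (simp add: ctrace_def sum_distrib_left )
lemma ctrace_sum: "ctrace (sum f S) = (\<Sum>x\<in>S. ctrace (f x))"
  by (simp add: ctrace_def sum_component) (rule sum.swap)
lemma outer_scale_left: "outer (c *s u) v = (\<chi> i j. c * outer u v $ i $ j)"
  by (simp add: outer_def vec_eq_iff)
lemma outer_scaleR_left: "outer (r *\<^sub>R u) v = r *\<^sub>R outer u v"
  by (simp add: outer_def vec_eq_iff )
lemma outer_scaleR_right: "outer u (r *\<^sub>R v) = r *\<^sub>R outer u v"
  by (simp add: outer_def vec_eq_iff )
lemma ctrace_outer_mult: "ctrace (outer u v ** B) = cinner v (B *v u)"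
  by (simp add: outer_mult_left ctrace_outer cinner_adjoint)
lemma matrix_mult_sum_left: "(sum f S) ** B = (\<Sum>x\<in>S. f x ** B)"
  by (simp add: matrix_matrix_mult_def vec_eq_iff sum_component sum_distrib_right) (intro allI sum.swap)
lemma matrix_mult_sum_right: "B ** (sum f S) = (\<Sum>x\<in>S. B ** f x)"
  by (simp add: matrix_matrix_mult_def vec_eq_iff sum_component sum_distrib_left) (intro allI sum.swap)
lemma matrix_mult_scaleR_left: "(r *\<^sub>R (A::complex^'n^'m)) ** B = r *\<^sub>R (A ** B)"
  by (simp add: matrix_matrix_mult_def vec_eq_iff sum_distrib_left mult.assoc mult.left_commute)
lemma matrix_mult_scaleR_right: "(A::complex^'n^'m) ** (r *\<^sub>R B) = r *\<^sub>R (A ** B)"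
  by (simp add: matrix_matrix_mult_def vec_eq_iff sum_distrib_left mult.assoc mult.left_commute)
lemma mult_vec_sum_left: "(sum f S) *v v = (\<Sum>x\<in>S. f x *v v)"
  by (simp add: matrix_vector_mult_def vec_eq_iff sum_component sum_distrib_right) (intro allI sum.swap)
lemma mult_vec_scaleR_left: "(r *\<^sub>R (A::complex^'n^'m)) *v v = r *\<^sub>R (A *v v)"
  by (simp add: matrix_vector_mult_def vec_eq_iff sum_distrib_left mult.assoc)
lemma scaleR_as_scale: "r *\<^sub>R (v::complex^'n) = of_real r *s v"
  by (simp add: vec_eq_iff  vector_scalar_mult_def)


lemma inner_cinner: "inner u (x::complex^'n) = Re (cinner u x)"
  by (simp add: inner_vec_def cinner_def inner_complex_def Re_sum)

lemma norm_sq_cinner: "(norm (x::complex^'n))^2 = Re (cinner x x)"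
  by (simp add: norm_vec_def L2_set_def cinner_self_Re sum_nonneg)

lemma cinner_real_self_hermitian:
  assumes "adjoint A = A" shows "cinner x (A *v x) = of_real (Re (cinner x (A *v x)))"
proof -
  have "cinner x (A *v x) = cnj (cinner x (A *v x))"
    by (metis assms cinner_adjoint cinner_commute)
  then show ?thesis by (metis Reals_cnj_iff complex_is_Real_iff of_real_Re)
qed

lemma onb_adj_U:
  assumes "onb \<alpha>"
  shows "adjoint (\<chi> r c. \<alpha> c $ r) ** (\<chi> r c. \<alpha> c $ r) = mat 1"
  using assms unfolding onb_def
  by (simp add: adjoint_def matrix_matrix_mult_def mat_def vec_eq_iff cinner_def)

lemma onb_resolution:
  assumes "onb (\<alpha>::'n::finite \<Rightarrow> complex^'n)"
  shows "(\<Sum>i\<in>UNIV. outer (\<alpha> i) (\<alpha> i)) = mat 1"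
proof -
  let ?U = "(\<chi> r c. \<alpha> c $ r) :: complex^'n^'n"
  have "?U ** adjoint ?U = mat 1"
    using onb_adj_U[OF assms] matrix_left_right_inverse by blast
  moreover have "?U ** adjoint ?U = (\<Sum>i\<in>UNIV. outer (\<alpha> i) (\<alpha> i))"
    by (simp add: adjoint_def matrix_matrix_mult_def vec_eq_iff outer_def sum_component)
  ultimately show ?thesis by simp
qed

lemma onb_expand:
  assumes "onb \<alpha>" shows "v = (\<Sum>i\<in>UNIV. cinner (\<alpha> i) v *s \<alpha> i)"
proof -
  have "v = mat 1 *v v" by simp
  also have "\<dots> = (\<Sum>i\<in>UNIV. outer (\<alpha> i) (\<alpha> i)) *v v" using onb_resolution[OF assms] by simp
  also have "\<dots> = (\<Sum>i\<in>UNIV. cinner (\<alpha> i) v *s \<alpha> i)"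
    by (simp add: mult_vec_sum_left outer_mult_vec)
  finally show ?thesis .
qed

lemma onb_parseval:
  assumes "onb \<alpha>" shows "cinner u v = (\<Sum>i\<in>UNIV. cinner u (\<alpha> i) * cinner (\<alpha> i) v)"
proof -
  have "cinner u v = cinner u (\<Sum>i\<in>UNIV. cinner (\<alpha> i) v *s \<alpha> i)"
    using onb_expand[OF assms, of v] by simp
  also have "\<dots> = (\<Sum>i\<in>UNIV. cinner u (\<alpha> i) * cinner (\<alpha> i) v)"
    by (simp add: cinner_sum_right cinner_scale_right mult.commute)
  finally show ?thesis .
qed

lemma onb_parseval_self:
  assumes "onb \<alpha>" shows "Re (cinner v v) = (\<Sum>i\<in>UNIV. (cmod (cinner (\<alpha> i) v))^2)"
proof -
  have "cinner v v = (\<Sum>i\<in>UNIV. cnj (cinner (\<alpha> i) v) * cinner (\<alpha> i) v)"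
    unfolding onb_parseval[OF assms, of v v] by (rule sum.cong) (simp_all add: cinner_commute[of v "\<alpha> _"])
  also have "\<dots> = of_real (\<Sum>i\<in>UNIV. (cmod (cinner (\<alpha> i) v))^2)"
    unfolding of_real_sum by (rule sum.cong) (simp_all only: complex_norm_square mult.commute)
  finally show ?thesis by simp
qed

lemma matrix_eq_on_onb:
  assumes "onb \<alpha>" shows "(A::complex^'n^'n) = (\<Sum>i\<in>UNIV. outer (A *v \<alpha> i) (\<alpha> i))"
proof -
  have "A = A ** mat 1" by simp
  also have "\<dots> = (\<Sum>i\<in>UNIV. outer (A *v \<alpha> i) (\<alpha> i))"
    unfolding onb_resolution[OF assms, symmetric] by (simp only: matrix_mult_sum_right outer_mult_right)
  finally show ?thesis .
qed


lemma mult_vec_scale: "(A::complex^'n^'m) *v (c *s x) = c *s (A *v x)"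
  by (simp add: matrix_vector_mult_def vector_scalar_mult_def vec_eq_iff sum_distrib_left mult_ac)

lemma cinner_orth_from_real:
  assumes "inner u x = 0" "inner (\<i> *s u) x = 0"
  shows "cinner u (x::complex^'n) = 0"
proof -
  have "Re (cinner u x) = 0" using assms(1) by (simp add: inner_cinner)
  moreover have "Re (cinner (\<i> *s u) x) = 0" using assms(2) by (simp add: inner_cinner)
  then have "Im (cinner u x) = 0" by (simp add: cinner_scale_left)
  ultimately show ?thesis by (simp add: complex_eq_iff)
qed

lemma exists_orth:
  fixes e :: "nat \<Rightarrow> complex^'n"
  assumes "k < CARD('n)"
  shows "\<exists>x. x \<noteq> 0 \<and> (\<forall>i<k. cinner (e i) x = 0)"
proof -
  let ?S = "(e ` {..<k}) \<union> ((\<lambda>i. \<i> *s e i) ` {..<k})"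
  have "dim ?S \<le> card ?S" by (rule dim_le_card') auto
  also have "\<dots> \<le> card (e ` {..<k}) + card ((\<lambda>i. \<i> *s e i) ` {..<k})" by (rule card_Un_le)
  also have "\<dots> \<le> k + k" by (intro add_mono) (metis card_image_le card_lessThan finite_lessThan)+
  also have "\<dots> < DIM(complex^'n)" using assms by (simp add: DIM_cart)
  finally obtain x where x: "x \<noteq> 0" "\<And>y. y \<in> span ?S \<Longrightarrow> orthogonal x y"
    by (rule orthogonal_to_subspace_exists) blast
  have "cinner (e i) x = 0" if "i < k" for i
  proof (rule cinner_orth_from_real)
    have ik: "i \<in> {..<k}" using that by simp
    have 1: "e i \<in> ?S" by (rule UnI1, rule imageI, rule ik)
    have 2: "\<i> *s e i \<in> ?S" by (rule UnI2, rule image_eqI[OF refl ik])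
    have "orthogonal x (e i)" "orthogonal x (\<i> *s e i)"
      by (rule x(2)[OF span_base[OF 1]]) (rule x(2)[OF span_base[OF 2]])
    then show "inner (e i) x = 0" "inner (\<i> *s e i) x = 0" by (simp_all add: orthogonal_def inner_commute)
  qed
  with x show ?thesis by blast
qed

lemma herm_eig_step:
  fixes A :: "complex^'n^'n" and e :: "nat \<Rightarrow> complex^'n"
  assumes herm: "adjoint A = A" and k: "k < CARD('n)"
    and eig: "\<forall>i<k. \<exists>c. A *v e i = c *s e i"
  shows "\<exists>v. cinner v v = 1 \<and> (\<forall>i<k. cinner (e i) v = 0) \<and> (\<exists>c. A *v v = c *s v)"
proof -
  define W where "W = {x::complex^'n. \<forall>i<k. cinner (e i) x = 0}"
  define f where "f x = Re (cinner x (A *v x))" for x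
  have W_closed: "closed W"
  proof -
    have "W = (\<Inter>i\<in>{..<k}. {x. cinner (e i) x = 0})" by (auto simp: W_def)
    moreover have "closed {x. cinner (e i) x = 0}" for i
      unfolding cinner_def by (intro closed_Collect_eq continuous_intros)
    ultimately show ?thesis by auto
  qed
  have W_add: "x + y \<in> W" if "x \<in> W" "y \<in> W" for x y
    using that by (simp add: W_def cinner_add_right)
  have W_scale: "c *s x \<in> W" if "x \<in> W" for x c
    using that by (simp add: W_def cinner_scale_right)
  have W_scaleR: "r *\<^sub>R x \<in> W" if "x \<in> W" for x r
    using W_scale[OF that] by (simp add: scaleR_as_scale)
  have W_A: "A *v x \<in> W" if "x \<in> W" for x
  proof -
    have "cinner (e i) (A *v x) = 0" if "i < k" for i
    proof -
      obtain c where c: "A *v e i = c *s e i" using eig \<open>i < k\<close> by blast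
      have "cinner (e i) (A *v x) = cinner (A *v e i) x" using herm by (simp add: cinner_adjoint)
      also have "\<dots> = 0" using \<open>x \<in> W\<close> \<open>i < k\<close> by (simp add: c cinner_scale_left W_def)
      finally show ?thesis .
    qed
    then show ?thesis by (simp add: W_def)
  qed
  obtain x0 where x0: "x0 \<noteq> 0" "x0 \<in> W" using exists_orth[OF k, of e] by (auto simp: W_def)
  define K where "K = W \<inter> sphere 0 1"
  have cK: "compact K" unfolding K_def using W_closed
    by (metis compact_Int_closed compact_sphere inf_commute)
  have "(1 / norm x0) *\<^sub>R x0 \<in> K" using x0 W_scaleR by (simp add: K_def)
  then have neK: "K \<noteq> {}" by blast
  have cf: "continuous_on K f"
  proof -
    have "f = (\<lambda>x. Re (\<Sum>i\<in>UNIV. cnj (x$i) * (\<Sum>j\<in>UNIV. A$i$j * x$j)))"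
      by (simp add: f_def cinner_def matrix_vector_mult_def fun_eq_iff)
    moreover have "continuous_on K (\<lambda>x::complex^'n. Re (\<Sum>i\<in>UNIV. cnj (x$i) * (\<Sum>j\<in>UNIV. A$i$j * x$j)))"
      by (intro continuous_intros)
    ultimately show ?thesis by (simp only:)
  qed
  obtain v where v: "v \<in> K" and vmax: "\<And>y. y \<in> K \<Longrightarrow> f y \<le> f v"
    using continuous_attains_sup[OF cK neK cf] by blast
  have vW: "v \<in> W" and vn: "norm v = 1" using v by (auto simp: K_def)
  have vv: "cinner v v = 1"
    using vn norm_sq_cinner[of v] cinner_self_real[of v] by simp
  have f_scale: "f (r *\<^sub>R y) = r^2 * f y" for r y
  proof -
    have "cinner (r *\<^sub>R y) (A *v (r *\<^sub>R y)) = of_real (r^2) * cinner y (A *v y)"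
      by (simp add: scaleR_as_scale mult_vec_scale cinner_scale_left cinner_scale_right power2_eq_square)
    then show ?thesis by (simp add: f_def)
  qed
  have homog: "f y \<le> f v * Re (cinner y y)" if "y \<in> W" for y
  proof (cases "y = 0")
    case True then show ?thesis by (simp add: f_def)
  next
    case False
    then have ny: "norm y > 0" by simp
    have "(1 / norm y) *\<^sub>R y \<in> K" using that False W_scaleR by (simp add: K_def)
    then have "f ((1 / norm y) *\<^sub>R y) \<le> f v" by (rule vmax)
    then have "(1 / norm y)^2 * f y \<le> f v" by (simp add: f_scale)
    then have "f y \<le> f v * (norm y)^2" using ny by (simp add: field_simps power2_eq_square)
    then show ?thesis by (simp add: norm_sq_cinner)
  qed
  define \<mu> where "\<mu> = cinner v (A *v v)"
  define u where "u = A *v v - \<mu> *s v"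
  have uW: "u \<in> W" using W_A[OF vW] vW by (simp add: W_def u_def cinner_diff_right cinner_scale_right)
  have vu: "cinner v u = 0" by (simp add: u_def cinner_diff_right cinner_scale_right vv \<mu>_def)
  have uv: "cinner u v = 0" using vu by (metis cinner_commute complex_cnj_zero)
  have uAv: "cinner u (A *v v) = cinner u u"
  proof -
    have "A *v v = u + \<mu> *s v" by (simp add: u_def)
    then show ?thesis by (simp add: cinner_add_right cinner_scale_right uv)
  qed
  have vAu: "cinner v (A *v u) = cnj (cinner u u)"
    using uAv herm by (metis cinner_adjoint cinner_commute)
  define nu where "nu = Re (cinner u u)"
  have nu_real: "cinner u u = of_real nu" by (simp add: nu_def cinner_self_real)
  have nu0: "nu \<ge> 0" by (simp add: nu_def cinner_self_nonneg)
  define C where "C = f v * nu - f u"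
  have key: "2 * t * nu \<le> t^2 * C" for t :: real
  proof -
    let ?y = "v + t *\<^sub>R u"
    have yW: "?y \<in> W" using W_add[OF vW W_scaleR[OF uW]] .
    have yy: "Re (cinner ?y ?y) = 1 + t^2 * nu"
      by (simp add: cinner_add_left cinner_add_right cinner_scaleR_left cinner_scaleR_right vv vu uv nu_real power2_eq_square)
    have fy: "f ?y = f v + 2 * t * nu + t^2 * f u"
      by (simp add: f_def matrix_vector_right_distrib scaleR_as_scale mult_vec_scale cinner_add_left cinner_add_right
          cinner_scale_left cinner_scale_right uAv vAu nu_real power2_eq_square algebra_simps)
    from homog[OF yW] show ?thesis unfolding fy yy C_def by (simp add: algebra_simps)
  qed
  have "nu = 0"
  proof (rule ccontr)
    assume "nu \<noteq> 0"
    then have nu_pos: "nu > 0" using nu0 by simp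
    define t where "t = nu / (\<bar>C\<bar> + 1)"
    have tpos: "t > 0" using nu_pos by (simp add: t_def)
    have "2 * t * nu \<le> t * (t * C)" using key[of t] by (simp add: power2_eq_square mult.assoc)
    then have "2 * nu \<le> t * C" using tpos by simp
    also have "t * C \<le> t * \<bar>C\<bar>" using tpos by (simp add: mult_left_mono)
    also have "\<dots> < nu"
    proof -
      have "t * \<bar>C\<bar> = nu * (\<bar>C\<bar> / (\<bar>C\<bar> + 1))" by (simp add: t_def)
      also have "\<dots> < nu * 1" using nu_pos by (intro mult_strict_left_mono) auto
      finally show ?thesis by simp
    qed
    finally show False using nu_pos by simp
  qed
  then have "cinner u u = 0" using nu_real by simp
  then have "u = 0" by (simp only: cinner_self_eq0)
  then have "A *v v = \<mu> *s v" by (simp add: u_def)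
  with vv vW show ?thesis by (auto simp: W_def)
qed

lemma herm_eig_k:
  fixes A :: "complex^'n^'n"
  assumes herm: "adjoint A = A" and k: "k \<le> CARD('n)"
  shows "\<exists>e::nat \<Rightarrow> complex^'n. (\<forall>i<k. \<forall>j<k. cinner (e i) (e j) = (if i = j then 1 else 0)) \<and>
           (\<forall>i<k. \<exists>c. A *v e i = c *s e i)"
  using k
proof (induction k)
  case 0 then show ?case by simp
next
  case (Suc k)
  then obtain e where e1: "\<forall>i<k. \<forall>j<k. cinner (e i) (e j) = (if i = j then 1 else 0)"
    and e2: "\<forall>i<k. \<exists>c. A *v e i = c *s e i" by auto
  obtain v where v: "cinner v v = 1" "\<forall>i<k. cinner (e i) v = 0" "\<exists>c. A *v v = c *s v"
    using herm_eig_step[OF herm _ e2] Suc.prems by auto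
  have vo: "\<forall>i<k. cinner v (e i) = 0" using v(2) by (metis cinner_commute complex_cnj_zero)
  let ?e = "e(k := v)"
  have "\<forall>i<Suc k. \<forall>j<Suc k. cinner (?e i) (?e j) = (if i = j then 1 else 0)"
    using e1 v vo by (auto simp: less_Suc_eq)
  moreover have "\<forall>i<Suc k. \<exists>c. A *v ?e i = c *s ?e i"
    using e2 v by (auto simp: less_Suc_eq)
  ultimately show ?case by blast
qed

theorem hermitian_spectral:
  fixes A :: "complex^'n^'n"
  assumes herm: "adjoint A = A"
  shows "\<exists>\<alpha> l. onb \<alpha> \<and> (\<forall>i. A *v \<alpha> i = of_real (l i) *s \<alpha> i)"
proof -
  obtain e :: "nat \<Rightarrow> complex^'n" where e1: "\<forall>i<CARD('n). \<forall>j<CARD('n). cinner (e i) (e j) = (if i = j then 1 else 0)"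
    and e2: "\<forall>i<CARD('n). \<exists>c. A *v e i = c *s e i"
    using herm_eig_k[OF herm, of "CARD('n)"] by auto
  obtain h where h: "bij_betw h (UNIV::'n set) {0..<CARD('n)}"
    using ex_bij_betw_finite_nat[of "UNIV::'n set"] by auto
  have hlt: "h i < CARD('n)" for i using h by (auto simp: bij_betw_def)
  have hinj: "h i = h j \<longleftrightarrow> i = j" for i j using h by (auto simp: bij_betw_def inj_on_def)
  define \<alpha> where "\<alpha> i = e (h i)" for i
  have onb: "onb \<alpha>" unfolding onb_def \<alpha>_def using e1 hlt hinj by simp
  have "\<exists>c. A *v \<alpha> i = c *s \<alpha> i" for i unfolding \<alpha>_def using e2 hlt by blast
  then obtain c where c: "\<And>i. A *v \<alpha> i = c i *s \<alpha> i" by metis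
  have "c i = of_real (Re (c i))" for i
  proof -
    have "cinner (\<alpha> i) (A *v \<alpha> i) = c i" using onb by (simp add: c cinner_scale_right onb_def)
    then show ?thesis using cinner_real_self_hermitian[OF herm, of "\<alpha> i"] by simp
  qed
  then have "\<forall>i. A *v \<alpha> i = of_real (Re (c i)) *s \<alpha> i" using c by metis
  with onb show ?thesis by (intro exI[of _ \<alpha>] exI[of _ "\<lambda>i. Re (c i)"]) simp
qed


lemma zcnj_sq: "z * cnj z = (complex_of_real (cmod z))^2"
  by (metis complex_norm_square of_real_power)

lemma cinner_neg_right: "cinner u (- v) = - cinner u v"
  by (simp add: cinner_def sum_negf)
lemma cinner_neg_left: "cinner (- u) v = - cinner u v"
  by (simp add: cinner_def sum_negf)

lemma psd_herm: "psd A \<Longrightarrow> adjoint A = A" by (simp add: psd_def)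
lemma psd_form_nonneg: "psd A \<Longrightarrow> 0 \<le> Re (cinner v (A *v v))" by (simp add: psd_def)
lemma psd_form_real: "psd A \<Longrightarrow> cinner v (A *v v) = of_real (Re (cinner v (A *v v)))"
  by (simp add: psd_def complex_is_Real_iff)

lemma psd_eig:
  assumes "psd A"
  shows "\<exists>\<alpha> l. onb \<alpha> \<and> (\<forall>i. A *v \<alpha> i = of_real (l i) *s \<alpha> i) \<and> (\<forall>i. 0 \<le> l i)"
proof -
  obtain \<alpha> l where o: "onb \<alpha>" and e: "\<forall>i. A *v \<alpha> i = of_real (l i) *s \<alpha> i"
    using hermitian_spectral[OF psd_herm[OF assms]] by blast
  have "0 \<le> l i" for i
  proof -
    have "cinner (\<alpha> i) (A *v \<alpha> i) = of_real (l i)" using o e by (simp add: cinner_scale_right onb_def)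
    then show ?thesis using psd_form_nonneg[OF assms, of "\<alpha> i"] by simp
  qed
  with o e show ?thesis by blast
qed

lemma outer_scale_real: "outer (of_real r *s u) v = r *\<^sub>R outer u v"
  by (simp add: outer_def vec_eq_iff vector_scalar_mult_def)

lemma spectral_sum:
  assumes "onb \<alpha>" "\<forall>i. A *v \<alpha> i = of_real (l i) *s \<alpha> i"
  shows "A = (\<Sum>i\<in>UNIV. l i *\<^sub>R outer (\<alpha> i) (\<alpha> i))"
  using matrix_eq_on_onb[OF assms(1), of A] assms(2) by (simp add: outer_scale_real)

lemma onb_outer_prod:
  assumes "onb \<alpha>"
  shows "outer (\<alpha> i) (\<alpha> i) ** outer (\<alpha> j) (\<alpha> j) = (if i = j then outer (\<alpha> i) (\<alpha> i) else 0)"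
proof -
  have "outer (\<alpha> i) (\<alpha> i) ** outer (\<alpha> j) (\<alpha> j) = outer (cinner (\<alpha> i) (\<alpha> j) *s \<alpha> i) (\<alpha> j)"
    by (rule outer_outer)
  also have "\<dots> = (if i = j then outer (\<alpha> i) (\<alpha> i) else 0)"
    using assms unfolding onb_def by (simp add: outer_def vec_eq_iff)
  finally show ?thesis .
qed

lemma diag_mult_vec:
  assumes "onb \<alpha>"
  shows "(\<Sum>i\<in>UNIV. s i *\<^sub>R outer (\<alpha> i) (\<alpha> i)) *v \<alpha> j = of_real (s j) *s \<alpha> j"
proof -
  have "(\<Sum>i\<in>UNIV. s i *\<^sub>R outer (\<alpha> i) (\<alpha> i)) *v \<alpha> j
      = (\<Sum>i\<in>UNIV. (if i = j then of_real (s j) *s \<alpha> j else 0))"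
    unfolding mult_vec_sum_left
    by (rule sum.cong) (use assms in \<open>auto simp: mult_vec_scaleR_left outer_mult_vec onb_def scaleR_as_scale\<close>)
  also have "\<dots> = of_real (s j) *s \<alpha> j" by simp
  finally show ?thesis .
qed

lemma diag_mult:
  assumes "onb \<alpha>"
  shows "(\<Sum>i\<in>UNIV. s i *\<^sub>R outer (\<alpha> i) (\<alpha> i)) ** (\<Sum>i\<in>UNIV. t i *\<^sub>R outer (\<alpha> i) (\<alpha> i))
       = (\<Sum>i\<in>UNIV. (s i * t i) *\<^sub>R outer (\<alpha> i) (\<alpha> i))"
proof -
  have "(\<Sum>i\<in>UNIV. s i *\<^sub>R outer (\<alpha> i) (\<alpha> i)) ** (\<Sum>i\<in>UNIV. t i *\<^sub>R outer (\<alpha> i) (\<alpha> i))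
      = (\<Sum>i\<in>UNIV. outer (of_real (s i) *s \<alpha> i) (\<alpha> i) ** (\<Sum>j\<in>UNIV. t j *\<^sub>R outer (\<alpha> j) (\<alpha> j)))"
    by (simp add: matrix_mult_sum_left outer_scale_real)
  also have "\<dots> = (\<Sum>i\<in>UNIV. outer (of_real (s i) *s \<alpha> i) (of_real (t i) *s \<alpha> i))"
  proof (rule sum.cong[OF refl])
    fix i
    have "adjoint (\<Sum>j\<in>UNIV. t j *\<^sub>R outer (\<alpha> j) (\<alpha> j)) = (\<Sum>j\<in>UNIV. t j *\<^sub>R outer (\<alpha> j) (\<alpha> j))"
      by (simp add: adjoint_sum adjoint_scaleR adjoint_outer)
    then show "outer (of_real (s i) *s \<alpha> i) (\<alpha> i) ** (\<Sum>j\<in>UNIV. t j *\<^sub>R outer (\<alpha> j) (\<alpha> j))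
        = outer (of_real (s i) *s \<alpha> i) (of_real (t i) *s \<alpha> i)"
      by (simp add: outer_mult_left diag_mult_vec[OF assms])
  qed
  also have "\<dots> = (\<Sum>i\<in>UNIV. (s i * t i) *\<^sub>R outer (\<alpha> i) (\<alpha> i))"
    by (rule sum.cong[OF refl]) (simp add: outer_scale_real flip: scaleR_as_scale, simp add: outer_scaleR_right outer_scaleR_left)
  finally show ?thesis .
qed

lemma diag_form:
  assumes "onb \<alpha>"
  shows "cinner v ((\<Sum>i\<in>UNIV. s i *\<^sub>R outer (\<alpha> i) (\<alpha> i)) *v v) = of_real (\<Sum>i\<in>UNIV. s i * (cmod (cinner (\<alpha> i) v))^2)"
proof -
  have "cinner v ((\<Sum>i\<in>UNIV. s i *\<^sub>R outer (\<alpha> i) (\<alpha> i)) *v v)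
      = (\<Sum>i\<in>UNIV. of_real (s i) * (cinner (\<alpha> i) v * cinner v (\<alpha> i)))"
    by (simp add: mult_vec_sum_left cinner_sum_right mult_vec_scaleR_left cinner_scaleR_right outer_mult_vec cinner_scale_right)
  also have "\<dots> = of_real (\<Sum>i\<in>UNIV. s i * (cmod (cinner (\<alpha> i) v))^2)"
    unfolding of_real_sum
    by (rule sum.cong[OF refl]) (simp add: cinner_commute[of v "\<alpha> _"] zcnj_sq)
  finally show ?thesis .
qed

lemma diag_adjoint: "adjoint (\<Sum>i\<in>UNIV. s i *\<^sub>R outer (\<alpha> i) (\<alpha> i)) = (\<Sum>i\<in>UNIV. s i *\<^sub>R outer (\<alpha> i) (\<alpha> i))"
  by (simp add: adjoint_sum adjoint_scaleR adjoint_outer)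

lemma diag_psd:
  assumes "onb \<alpha>" "\<forall>i. 0 \<le> s i"
  shows "psd (\<Sum>i\<in>UNIV. s i *\<^sub>R outer (\<alpha> i) (\<alpha> i))"
  unfolding psd_def using assms by (simp add: diag_adjoint diag_form[OF assms(1)] sum_nonneg)

lemma psd_square: "psd B \<Longrightarrow> psd (B ** B)"
  unfolding psd_def
  by (simp add: adjoint_mult flip: matrix_vector_mul_assoc)
     (metis cinner_adjoint cinner_self_nonneg cinner_self_real Reals_of_real)

lemma sqrt_eigvec:
  assumes B: "psd B" and BB: "B ** B = A" and ev: "A *v v = of_real l *s v" and l: "0 \<le> l"
  shows "B *v v = of_real (sqrt l) *s v"
proof -
  define s where "s = sqrt l"
  have s0: "s \<ge> 0" and ss: "s * s = l" using l by (simp_all add: s_def)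
  define u where "u = B *v v - of_real s *s v"
  have Bu: "B *v u = (- of_real s) *s u"
  proof -
    have h: "B *v (B *v v) = of_real l *s v" using ev BB by (simp add: matrix_vector_mul_assoc)
    have "B *v u = B *v (B *v v) - of_real s *s (B *v v)"
      by (simp add: u_def matrix_vector_mult_diff_distrib mult_vec_scale)
    also have "\<dots> = (- of_real s) *s u"
      unfolding h u_def ss[symmetric]
      by (simp add: vec_eq_iff vector_scalar_mult_def algebra_simps)
    finally show ?thesis .
  qed
  show ?thesis
  proof (cases "s = 0")
    case True
    then have l0: "l = 0" using ss by simp
    have "cinner v (B *v (B *v v)) = cinner (adjoint B *v v) (B *v v)" by (rule cinner_adjoint)
    then have "cinner (B *v v) (B *v v) = cinner v (A *v v)"
      using psd_herm[OF B] BB by (simp add: matrix_vector_mul_assoc)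
    also have "\<dots> = 0" using ev l0 by simp
    finally have "B *v v = 0" by (simp only: cinner_self_eq0)
    then show ?thesis using True s_def by simp
  next
    case False
    then have spos: "s > 0" using s0 by simp
    have "cinner u (B *v u) = - of_real s * cinner u u" using Bu by (simp add: cinner_scale_right cinner_neg_right)
    then have "Re (cinner u (B *v u)) = - s * Re (cinner u u)" by simp
    then have "- s * Re (cinner u u) \<ge> 0" using psd_form_nonneg[OF B, of u] by simp
    then have "Re (cinner u u) \<le> 0" using spos by (simp add: mult_le_0_iff)
    then have "Re (cinner u u) = 0" using cinner_self_nonneg[of u] by simp
    then have "u = 0" by (simp only: cinner_self_Re_eq0)
    then show ?thesis by (simp add: u_def s_def)
  qed
qed

lemma psd_sqrt_unique:
  assumes o: "onb \<alpha>" and ev: "\<forall>i. A *v \<alpha> i = of_real (l i) *s \<alpha> i" and l: "\<forall>i. 0 \<le> l i"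
    and B: "psd B" and BB: "B ** B = A"
  shows "B = (\<Sum>i\<in>UNIV. sqrt (l i) *\<^sub>R outer (\<alpha> i) (\<alpha> i))"
proof -
  have "\<forall>i. B *v \<alpha> i = of_real (sqrt (l i)) *s \<alpha> i"
    using sqrt_eigvec[OF B BB] ev l by blast
  then show ?thesis by (rule spectral_sum[OF o])
qed

lemma msqrt_spec:
  assumes o: "onb \<alpha>" and ev: "\<forall>i. A *v \<alpha> i = of_real (l i) *s \<alpha> i" and l: "\<forall>i. 0 \<le> l i"
  shows "msqrt A = (\<Sum>i\<in>UNIV. sqrt (l i) *\<^sub>R outer (\<alpha> i) (\<alpha> i))"
proof -
  let ?B = "(\<Sum>i\<in>UNIV. sqrt (l i) *\<^sub>R outer (\<alpha> i) (\<alpha> i))"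
  have Bpsd: "psd ?B" using diag_psd[OF o] l by simp
  have "?B ** ?B = (\<Sum>i\<in>UNIV. (sqrt (l i) * sqrt (l i)) *\<^sub>R outer (\<alpha> i) (\<alpha> i))"
    by (rule diag_mult[OF o])
  also have "\<dots> = A" using l spectral_sum[OF o ev] by simp
  finally have BB: "?B ** ?B = A" .
  show ?thesis unfolding msqrt_def
  proof (rule the_equality)
    show "psd ?B \<and> ?B ** ?B = A" using Bpsd BB by simp
    fix C assume "psd C \<and> C ** C = A"
    then show "C = ?B" using psd_sqrt_unique[OF o ev l] by blast
  qed
qed

lemma msqrt_props:
  assumes "psd A" shows "psd (msqrt A)" "msqrt A ** msqrt A = A"
proof -
  obtain \<alpha> l where o: "onb \<alpha>" and ev: "\<forall>i. A *v \<alpha> i = of_real (l i) *s \<alpha> i" and l: "\<forall>i. 0 \<le> l i"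
    using psd_eig[OF assms] by blast
  have eq: "msqrt A = (\<Sum>i\<in>UNIV. sqrt (l i) *\<^sub>R outer (\<alpha> i) (\<alpha> i))" by (rule msqrt_spec[OF o ev l])
  show "psd (msqrt A)" unfolding eq using diag_psd[OF o] l by simp
  show "msqrt A ** msqrt A = A" unfolding eq diag_mult[OF o] using l spectral_sum[OF o ev] by simp
qed

lemma msqrt_unique:
  assumes "psd B" "B ** B = A" shows "msqrt A = B"
proof -
  have A: "psd A" using psd_square[OF assms(1)] assms(2) by simp
  obtain \<alpha> l where o: "onb \<alpha>" and ev: "\<forall>i. A *v \<alpha> i = of_real (l i) *s \<alpha> i" and l: "\<forall>i. 0 \<le> l i"
    using psd_eig[OF A] by blast
  show ?thesis using msqrt_spec[OF o ev l] psd_sqrt_unique[OF o ev l assms] by simp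
qed


lemma sum_prod_UNIV: "(\<Sum>p\<in>(UNIV::('a::finite \<times> 'b::finite) set). f p) = (\<Sum>a\<in>UNIV. \<Sum>b\<in>UNIV. f (a, b))"
  by (simp add: sum.cartesian_product UNIV_Times_UNIV[symmetric] del: UNIV_Times_UNIV)

definition pin :: "complex^'a::finite \<Rightarrow> complex^('a \<times> 'b::finite) \<Rightarrow> complex^'b" where
  "pin x \<psi> = (\<chi> j. \<Sum>k\<in>UNIV. cnj (x$k) * \<psi>$(k,j))"

lemma kron_outer_vec:
  "(kron (outer x x) T *v \<psi>) $ (a, b) = x$a * (T *v pin x \<psi>) $ b"
proof -
  have "(kron (outer x x) T *v \<psi>) $ (a, b) = (\<Sum>q1\<in>UNIV. \<Sum>q2\<in>UNIV. x$a * cnj (x$q1) * T$b$q2 * \<psi>$(q1,q2))"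
    by (simp add: matrix_vector_mult_def kron_def outer_def sum_prod_UNIV)
  also have "\<dots> = (\<Sum>q2\<in>UNIV. \<Sum>q1\<in>UNIV. x$a * cnj (x$q1) * T$b$q2 * \<psi>$(q1,q2))"
    by (rule sum.swap)
  also have "\<dots> = x$a * (T *v pin x \<psi>) $ b"
    by (simp add: matrix_vector_mult_def pin_def sum_distrib_left mult_ac)
  finally show ?thesis .
qed

lemma kron_outer_form:
  "cinner \<psi> (kron (outer x x) T *v \<psi>) = cinner (pin x \<psi>) (T *v pin x \<psi>)"
proof -
  have "cinner \<psi> (kron (outer x x) T *v \<psi>) = (\<Sum>a\<in>UNIV. \<Sum>b\<in>UNIV. cnj (\<psi>$(a,b)) * (x$a * (T *v pin x \<psi>) $ b))"
    by (simp add: cinner_def sum_prod_UNIV kron_outer_vec)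
  also have "\<dots> = (\<Sum>b\<in>UNIV. \<Sum>a\<in>UNIV. cnj (\<psi>$(a,b)) * (x$a * (T *v pin x \<psi>) $ b))"
    by (rule sum.swap)
  also have "\<dots> = cinner (pin x \<psi>) (T *v pin x \<psi>)"
    by (simp add: cinner_def pin_def cnj_sum sum_distrib_right mult_ac)
  finally show ?thesis .
qed

lemma adjoint_kron: "adjoint (kron A B) = kron (adjoint A) (adjoint B)"
  by (simp add: adjoint_def kron_def vec_eq_iff)

lemma ctrace_kron: "ctrace (kron A B) = ctrace A * ctrace B"
  by (simp add: ctrace_def kron_def sum_prod_UNIV sum_product)

lemma kron_mult: "kron A B ** kron C D = kron (A ** C) (B ** D)"
  by (simp add: kron_def matrix_matrix_mult_def vec_eq_iff sum_prod_UNIV sum_product mult_ac)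

lemma kron_zero_left[simp]: "kron 0 B = 0"
  by (simp add: kron_def vec_eq_iff)

lemma kron_scaleR_left: "kron (r *\<^sub>R A) B = r *\<^sub>R kron A B"
  by (simp add: kron_def vec_eq_iff mult.assoc)
lemma kron_scaleR_right: "kron A (r *\<^sub>R B) = r *\<^sub>R kron A B"
  by (simp add: kron_def vec_eq_iff mult_ac)

lemma psd_zero: "psd 0"
  by (simp add: psd_def adjoint_def vec_eq_iff)

lemma psd_add: "psd A \<Longrightarrow> psd B \<Longrightarrow> psd (A + B)"
  unfolding psd_def by (simp add: adjoint_add matrix_vector_mult_add_rdistrib cinner_add_right complex_is_Real_iff)

lemma psd_scaleR: "psd A \<Longrightarrow> 0 \<le> r \<Longrightarrow> psd (r *\<^sub>R A)"
  unfolding psd_def by (simp add: adjoint_scaleR mult_vec_scaleR_left cinner_scaleR_right complex_is_Real_iff)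

lemma psd_sum: "(\<And>x. x \<in> S \<Longrightarrow> psd (f x)) \<Longrightarrow> psd (sum f S)"
proof (induction S rule: infinite_finite_induct)
  case (infinite S) then show ?case by (simp add: psd_zero)
next
  case empty then show ?case by (simp add: psd_zero)
next
  case (insert x F) then show ?case by (simp add: psd_add)
qed

lemma psd_kron_outer: "psd T \<Longrightarrow> psd (kron (outer x x) T)"
  unfolding psd_def
  by (simp add: adjoint_kron adjoint_outer kron_outer_form)

lemma psd_outer: "psd (outer x x)"
  unfolding psd_def
  by (simp add: adjoint_outer outer_mult_vec cinner_scale_right cinner_commute[of x]
      mult.commute zcnj_sq complex_is_Real_iff flip: of_real_power)

lemma density_outer: "cinner x x = 1 \<Longrightarrow> density (outer x x)"
  by (simp add: density_def psd_outer ctrace_outer)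

lemma ctrace_psd_real: "psd A \<Longrightarrow> ctrace A = of_real (Re (ctrace A)) \<and> 0 \<le> Re (ctrace A)"
proof -
  assume A: "psd A"
  obtain \<alpha> l where o: "onb \<alpha>" and ev: "\<forall>i. A *v \<alpha> i = of_real (l i) *s \<alpha> i" and l: "\<forall>i. 0 \<le> l i"
    using psd_eig[OF A] by blast
  have "ctrace A = of_real (\<Sum>i\<in>UNIV. l i)"
    by (subst spectral_sum[OF o ev]) (use o in \<open>simp add: ctrace_sum ctrace_scaleR ctrace_outer onb_def of_real_sum\<close>)
  then show ?thesis using l by (simp add: sum_nonneg)
qed

lemma density_cq:
  assumes nrm: "\<forall>i. cinner (\<alpha> i) (\<alpha> i) = 1" and s: "\<sigma> \<in> cq_states \<alpha>"
  shows "density \<sigma>"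
proof -
  obtain p \<tau> where p: "\<forall>i. 0 \<le> p i" "(\<Sum>i\<in>UNIV. p i) = 1" and t: "\<forall>i. density (\<tau> i)"
    and se: "\<sigma> = (\<Sum>i\<in>UNIV. p i *\<^sub>R kron (outer (\<alpha> i) (\<alpha> i)) (\<tau> i))"
    using s unfolding cq_states_def by blast
  have "psd \<sigma>" unfolding se using p t
    by (intro psd_sum psd_scaleR psd_kron_outer) (auto simp: density_def)
  moreover have "ctrace \<sigma> = 1" unfolding se using p t nrm
    by (simp add: ctrace_sum ctrace_scaleR ctrace_kron ctrace_outer density_def flip: of_real_sum)
  ultimately show ?thesis by (simp add: density_def)
qed


lemma eig_form_le:
  assumes o: "onb \<alpha>" and ev: "\<forall>i. M *v \<alpha> i = of_real (l i) *s \<alpha> i" and c: "\<forall>i. l i \<le> c"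
  shows "Re (cinner x (M *v x)) \<le> c * Re (cinner x x)"
proof -
  have "Re (cinner x (M *v x)) = (\<Sum>i\<in>UNIV. l i * (cmod (cinner (\<alpha> i) x))^2)"
    by (subst spectral_sum[OF o ev]) (simp add: diag_form[OF o])
  also have "\<dots> \<le> (\<Sum>i\<in>UNIV. c * (cmod (cinner (\<alpha> i) x))^2)"
    using c by (intro sum_mono mult_right_mono) auto
  also have "\<dots> = c * Re (cinner x x)" by (simp add: onb_parseval_self[OF o] sum_distrib_left)
  finally show ?thesis .
qed

lemma eig_trace:
  assumes o: "onb \<alpha>" and ev: "\<forall>i. M *v \<alpha> i = of_real (l i) *s \<alpha> i"
  shows "ctrace M = of_real (\<Sum>i\<in>UNIV. l i)"
  by (subst spectral_sum[OF o ev]) (use o in \<open>simp add: ctrace_sum ctrace_scaleR ctrace_outer onb_def of_real_sum\<close>)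

lemma density_eig_le1:
  assumes d: "density \<tau>" and o: "onb \<alpha>" and ev: "\<forall>i. \<tau> *v \<alpha> i = of_real (l i) *s \<alpha> i" and l: "\<forall>i. 0 \<le> l i"
  shows "l i \<le> 1"
proof -
  have "(\<Sum>i\<in>UNIV. l i) = 1" using eig_trace[OF o ev] d unfolding density_def by (metis of_real_eq_1_iff)
  moreover have "l i \<le> (\<Sum>i\<in>UNIV. l i)" using l by (intro member_le_sum) auto
  ultimately show ?thesis by simp
qed

lemma density_form_le:
  assumes d: "density \<tau>" shows "Re (cinner x (\<tau> *v x)) \<le> Re (cinner x x)"
proof -
  obtain \<alpha> l where o: "onb \<alpha>" and ev: "\<forall>i. \<tau> *v \<alpha> i = of_real (l i) *s \<alpha> i" and l: "\<forall>i. 0 \<le> l i"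
    using psd_eig[of \<tau>] d unfolding density_def by blast
  show ?thesis using eig_form_le[OF o ev, of 1] density_eig_le1[OF d o ev l] by simp
qed

lemma sqrt_density_form_le:
  assumes d: "density \<tau>" shows "Re (cinner x (msqrt \<tau> *v x)) \<le> Re (cinner x x)"
proof -
  obtain \<alpha> l where o: "onb \<alpha>" and ev: "\<forall>i. \<tau> *v \<alpha> i = of_real (l i) *s \<alpha> i" and l: "\<forall>i. 0 \<le> l i"
    using psd_eig[of \<tau>] d unfolding density_def by blast
  have eq: "msqrt \<tau> = (\<Sum>i\<in>UNIV. sqrt (l i) *\<^sub>R outer (\<alpha> i) (\<alpha> i))" by (rule msqrt_spec[OF o ev l])
  have ev2: "\<forall>i. msqrt \<tau> *v \<alpha> i = of_real (sqrt (l i)) *s \<alpha> i" unfolding eq by (simp add: diag_mult_vec[OF o])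
  have "\<forall>i. sqrt (l i) \<le> 1" using density_eig_le1[OF d o ev l] by simp
  then show ?thesis using eig_form_le[OF o ev2, of 1] by simp
qed

lemma diag_trace_mult:
  "ctrace ((\<Sum>i\<in>UNIV. s i *\<^sub>R outer (\<alpha> i) (\<alpha> i)) ** B) = (\<Sum>i\<in>UNIV. of_real (s i) * cinner (\<alpha> i) (B *v \<alpha> i))"
  by (simp add: matrix_mult_sum_left matrix_mult_scaleR_left ctrace_sum ctrace_scaleR ctrace_outer_mult)

lemma density_sqrt_decomp:
  assumes d: "density \<rho>"
  obtains \<gamma> r where "onb \<gamma>" "\<forall>i. 0 \<le> r i" "\<forall>i. r i \<le> 1" "(\<Sum>i\<in>UNIV. r i) = 1"
    "\<rho> = (\<Sum>i\<in>UNIV. r i *\<^sub>R outer (\<gamma> i) (\<gamma> i))"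
    "msqrt \<rho> = (\<Sum>i\<in>UNIV. sqrt (r i) *\<^sub>R outer (\<gamma> i) (\<gamma> i))"
proof -
  obtain \<alpha> l where o: "onb \<alpha>" and ev: "\<forall>i. \<rho> *v \<alpha> i = of_real (l i) *s \<alpha> i" and l: "\<forall>i. 0 \<le> l i"
    using psd_eig[of \<rho>] d unfolding density_def by blast
  have "(\<Sum>i\<in>UNIV. l i) = 1" using eig_trace[OF o ev] d unfolding density_def by (metis of_real_eq_1_iff)
  then show ?thesis using that[OF o l _ _ spectral_sum[OF o ev] msqrt_spec[OF o ev l]] density_eig_le1[OF d o ev l] by blast
qed

lemma fidelity_bounds:
  fixes \<rho> \<sigma> :: "'n::finite cmat"
  assumes r: "density \<rho>" and s: "density \<sigma>"
  shows "0 \<le> fidelity \<rho> \<sigma> \<and> fidelity \<rho> \<sigma> \<le> real CARD('n)"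
proof -
  let ?S = "msqrt \<sigma>"
  have Sp: "psd ?S" and SS: "?S ** ?S = \<sigma>" using msqrt_props s by (auto simp: density_def)
  define M where "M = ?S ** \<rho> ** ?S"
  have Mp: "psd M"
  proof -
    have rh: "adjoint \<rho> = \<rho>" using r by (simp add: density_def psd_def)
    have "adjoint M = M" unfolding M_def adjoint_mult psd_herm[OF Sp] rh by (simp only: matrix_mul_assoc)
    moreover have "cinner v (M *v v) = cinner (?S *v v) (\<rho> *v (?S *v v))" for v
      unfolding M_def using psd_herm[OF Sp] by (simp add: cinner_adjoint flip: matrix_vector_mul_assoc)
    ultimately show ?thesis using r by (simp add: psd_def density_def)
  qed
  obtain \<beta> m where o: "onb \<beta>" and ev: "\<forall>i. M *v \<beta> i = of_real (m i) *s \<beta> i" and m: "\<forall>i. 0 \<le> m i"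
    using psd_eig[OF Mp] by blast
  obtain \<gamma> rr where og: "onb \<gamma>" and rr: "\<forall>i. 0 \<le> rr i" "\<forall>i. rr i \<le> 1" "(\<Sum>i\<in>UNIV. rr i) = 1"
    and re: "\<rho> = (\<Sum>i\<in>UNIV. rr i *\<^sub>R outer (\<gamma> i) (\<gamma> i))"
    and "msqrt \<rho> = (\<Sum>i\<in>UNIV. sqrt (rr i) *\<^sub>R outer (\<gamma> i) (\<gamma> i))"
    by (rule density_sqrt_decomp[OF r])
  have "ctrace M = ctrace (?S ** (?S ** \<rho>))" unfolding M_def by (rule ctrace_comm)
  also have "\<dots> = ctrace (\<sigma> ** \<rho>)" by (simp only: matrix_mul_assoc SS)
  also have "\<dots> = ctrace (\<rho> ** \<sigma>)" by (rule ctrace_comm)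
  also have "\<dots> = (\<Sum>i\<in>UNIV. of_real (rr i) * cinner (\<gamma> i) (\<sigma> *v \<gamma> i))"
    by (subst re) (rule diag_trace_mult)
  finally have trM: "ctrace M = \<dots>" .
  have "Re (ctrace M) \<le> 1"
  proof -
    have "Re (ctrace M) = (\<Sum>i\<in>UNIV. rr i * Re (cinner (\<gamma> i) (\<sigma> *v \<gamma> i)))" by (simp add: trM)
    also have "\<dots> \<le> (\<Sum>i\<in>UNIV. rr i * 1)"
    proof (rule sum_mono, rule mult_left_mono)
      fix i show "Re (cinner (\<gamma> i) (\<sigma> *v \<gamma> i)) \<le> 1"
        using density_form_le[OF s, of "\<gamma> i"] og by (simp add: onb_def)
    qed (use rr in auto)
    finally show ?thesis using rr by simp
  qed
  then have msum: "(\<Sum>i\<in>UNIV. m i) \<le> 1" using eig_trace[OF o ev] by simp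
  have mle: "m i \<le> 1" for i using msum m member_le_sum[of i UNIV m] by simp
  have eqC: "msqrt M = (\<Sum>i\<in>UNIV. sqrt (m i) *\<^sub>R outer (\<beta> i) (\<beta> i))" by (rule msqrt_spec[OF o ev m])
  have "fidelity \<rho> \<sigma> = Re (ctrace (msqrt M))" by (simp add: fidelity_def M_def)
  also have "\<dots> = (\<Sum>i\<in>UNIV. sqrt (m i))"
    unfolding eqC using o by (simp add: ctrace_sum ctrace_scaleR ctrace_outer onb_def)
  finally have F: "fidelity \<rho> \<sigma> = (\<Sum>i\<in>UNIV. sqrt (m i))" .
  have "(\<Sum>i\<in>UNIV. sqrt (m i)) \<le> (\<Sum>i\<in>(UNIV::'n set). (1::real))" using mle by (intro sum_mono) simp
  then show ?thesis unfolding F using m by (simp add: sum_nonneg)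
qed

lemma affinity_bounds:
  fixes \<rho> \<sigma> :: "'n::finite cmat"
  assumes r: "density \<rho>" and s: "density \<sigma>"
  shows "0 \<le> affinity \<rho> \<sigma> \<and> affinity \<rho> \<sigma> \<le> real CARD('n)"
proof -
  obtain \<gamma> rr where og: "onb \<gamma>" and rr: "\<forall>i. 0 \<le> rr i" "\<forall>i. rr i \<le> 1" "(\<Sum>i\<in>UNIV. rr i) = 1"
    and "\<rho> = (\<Sum>i\<in>UNIV. rr i *\<^sub>R outer (\<gamma> i) (\<gamma> i))"
    and re: "msqrt \<rho> = (\<Sum>i\<in>UNIV. sqrt (rr i) *\<^sub>R outer (\<gamma> i) (\<gamma> i))"
    by (rule density_sqrt_decomp[OF r])
  have Sp: "psd (msqrt \<sigma>)" using msqrt_props s by (auto simp: density_def)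
  have A: "affinity \<rho> \<sigma> = (\<Sum>i\<in>UNIV. sqrt (rr i) * Re (cinner (\<gamma> i) (msqrt \<sigma> *v \<gamma> i)))"
    unfolding affinity_def re diag_trace_mult by (simp add: Re_sum)
  have a0: "0 \<le> Re (cinner (\<gamma> i) (msqrt \<sigma> *v \<gamma> i))" for i using psd_form_nonneg[OF Sp] .
  have a1: "Re (cinner (\<gamma> i) (msqrt \<sigma> *v \<gamma> i)) \<le> 1" for i
    using sqrt_density_form_le[OF s, of "\<gamma> i"] og by (simp add: onb_def)
  have b1: "sqrt (rr i) * Re (cinner (\<gamma> i) (msqrt \<sigma> *v \<gamma> i)) \<le> 1" for i
    using rr a0[of i] a1[of i] by (simp add: mult_le_one)
  have b0: "0 \<le> sqrt (rr i) * Re (cinner (\<gamma> i) (msqrt \<sigma> *v \<gamma> i))" for i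
    using rr a0[of i] by simp
  have "(\<Sum>i\<in>UNIV. sqrt (rr i) * Re (cinner (\<gamma> i) (msqrt \<sigma> *v \<gamma> i))) \<le> (\<Sum>i\<in>(UNIV::'n set). (1::real))"
    by (rule sum_mono) (rule b1)
  then show ?thesis unfolding A using b0 by (simp add: sum_nonneg)
qed


lemma msqrt_outer: "msqrt (outer \<phi> \<phi>) = (1 / sqrt (Re (cinner \<phi> \<phi>))) *\<^sub>R outer \<phi> \<phi>"
proof (rule msqrt_unique)
  let ?n = "Re (cinner \<phi> \<phi>)"
  have n0: "?n \<ge> 0" by (rule cinner_self_nonneg)
  show "psd ((1 / sqrt ?n) *\<^sub>R outer \<phi> \<phi>)" using n0 by (intro psd_scaleR psd_outer) simp
  show "(1 / sqrt ?n) *\<^sub>R outer \<phi> \<phi> ** (1 / sqrt ?n) *\<^sub>R outer \<phi> \<phi> = outer \<phi> \<phi>"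
  proof (cases "?n = 0")
    case True
    then have "\<phi> = 0" by (simp only: cinner_self_Re_eq0)
    then have "outer \<phi> \<phi> = 0" by (simp add: outer_def vec_eq_iff)
    then show ?thesis by (simp add: matrix_mult_scaleR_left matrix_matrix_mult_def vec_eq_iff)
  next
    case False
    then have np: "?n > 0" using n0 by simp
    have "(1 / sqrt ?n) *\<^sub>R outer \<phi> \<phi> ** (1 / sqrt ?n) *\<^sub>R outer \<phi> \<phi>
        = ((1 / sqrt ?n) * (1 / sqrt ?n)) *\<^sub>R outer (cinner \<phi> \<phi> *s \<phi>) \<phi>"
      by (simp add: matrix_mult_scaleR_left matrix_mult_scaleR_right outer_outer)
    also have "\<dots> = ((1 / sqrt ?n) * (1 / sqrt ?n) * ?n) *\<^sub>R outer \<phi> \<phi>"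
      by (subst cinner_self_real[symmetric]) (simp add: outer_scale_real)
    also have "(1 / sqrt ?n) * (1 / sqrt ?n) * ?n = 1" using np
      by (simp add: field_simps real_sqrt_mult[symmetric])
    finally show ?thesis by simp
  qed
qed

lemma fidelity_pure:
  assumes s: "psd \<sigma>"
  shows "fidelity (outer \<psi> \<psi>) \<sigma> = sqrt (Re (cinner \<psi> (\<sigma> *v \<psi>)))"
proof -
  let ?S = "msqrt \<sigma>"
  have Sp: "psd ?S" and SS: "?S ** ?S = \<sigma>" using msqrt_props[OF s] by auto
  define \<phi> where "\<phi> = ?S *v \<psi>"
  have M: "?S ** outer \<psi> \<psi> ** ?S = outer \<phi> \<phi>"
    unfolding \<phi>_def outer_mult_right outer_mult_left psd_herm[OF Sp] ..
  have nphi: "cinner \<phi> \<phi> = cinner \<psi> (\<sigma> *v \<psi>)"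
  proof -
    have "cinner \<psi> (?S *v (?S *v \<psi>)) = cinner (adjoint ?S *v \<psi>) (?S *v \<psi>)" by (rule cinner_adjoint)
    then show ?thesis unfolding \<phi>_def psd_herm[OF Sp] matrix_vector_mul_assoc SS by simp
  qed
  let ?n = "Re (cinner \<phi> \<phi>)"
  have "fidelity (outer \<psi> \<psi>) \<sigma> = Re (ctrace ((1 / sqrt ?n) *\<^sub>R outer \<phi> \<phi>))"
    by (simp add: fidelity_def M msqrt_outer)
  also have "\<dots> = (1 / sqrt ?n) * ?n" by (simp add: ctrace_scaleR ctrace_outer)
  also have "\<dots> = sqrt ?n"
    using cinner_self_nonneg[of \<phi>] by (cases "?n = 0") (simp_all add: field_simps real_sqrt_mult[symmetric])
  finally show ?thesis using nphi by simp
qed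

lemma msqrt_pure: "cinner \<psi> \<psi> = 1 \<Longrightarrow> msqrt (outer \<psi> \<psi>) = outer \<psi> \<psi>"
  by (simp add: msqrt_outer)

lemma affinity_pure:
  assumes "cinner \<psi> \<psi> = 1"
  shows "affinity (outer \<psi> \<psi>) \<sigma> = Re (cinner \<psi> (msqrt \<sigma> *v \<psi>))"
  by (simp add: affinity_def msqrt_pure[OF assms] ctrace_outer_mult)

lemma adjoint_ptrace: "adjoint (ptrace_b R) = ptrace_b (adjoint R)"
  by (simp add: adjoint_def ptrace_b_def vec_eq_iff cnj_sum)

lemma ptrace_pure_form: "cinner x (ptrace_b (outer \<psi> \<psi>) *v x) = cinner (pin x \<psi>) (pin x \<psi>)"
proof -
  have "cinner x (ptrace_b (outer \<psi> \<psi>) *v x)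
      = (\<Sum>i\<in>UNIV. \<Sum>i'\<in>UNIV. \<Sum>j\<in>UNIV. cnj (x$i) * (\<psi>$(i,j) * cnj (\<psi>$(i',j))) * x$i')"
    by (simp add: cinner_def ptrace_b_def outer_def matrix_vector_mult_def sum_distrib_left sum_distrib_right mult_ac)
  also have "\<dots> = (\<Sum>i\<in>UNIV. \<Sum>j\<in>UNIV. \<Sum>i'\<in>UNIV. cnj (x$i) * (\<psi>$(i,j) * cnj (\<psi>$(i',j))) * x$i')"
    by (rule sum.cong[OF refl], rule sum.swap)
  also have "\<dots> = (\<Sum>j\<in>UNIV. \<Sum>i\<in>UNIV. \<Sum>i'\<in>UNIV. cnj (x$i) * (\<psi>$(i,j) * cnj (\<psi>$(i',j))) * x$i')"
    by (rule sum.swap)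
  also have "\<dots> = cinner (pin x \<psi>) (pin x \<psi>)"
    by (simp add: cinner_def pin_def cnj_sum sum_distrib_left sum_distrib_right mult_ac)
  finally show ?thesis .
qed


lemma axis_unit: "cinner (axis k (1::complex)) (axis k 1) = 1"
proof -
  have "cinner (axis k (1::complex)) (axis k 1) = (\<Sum>i\<in>UNIV. if i = k then 1 else 0)"
    unfolding cinner_def axis_def by (rule sum.cong) auto
  then show ?thesis by simp
qed

lemma best_unit:
  "\<exists>w. cinner w w = 1 \<and> Re (cinner \<phi> (outer w w *v \<phi>)) = Re (cinner \<phi> \<phi>)"
proof (cases "\<phi> = 0")
  case True
  then show ?thesis using axis_unit by auto
next
  case False
  define n where "n = Re (cinner \<phi> \<phi>)"
  have np: "n > 0" using False cinner_self_nonneg[of \<phi>] cinner_self_Re_eq0[of \<phi>] unfolding n_def by linarith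
  let ?c = "1 / sqrt n"
  define w where "w = ?c *\<^sub>R \<phi>"
  have cphi: "cinner \<phi> \<phi> = of_real n" unfolding n_def by (simp only: cinner_self_real)
  have "cinner w w = of_real ?c * (of_real ?c * cinner \<phi> \<phi>)"
    by (simp only: w_def cinner_scaleR_left cinner_scaleR_right)
  also have "\<dots> = of_real (?c * ?c * n)" by (simp only: cphi of_real_mult mult.assoc)
  also have "?c * ?c * n = 1" using np by (simp add: field_simps real_sqrt_mult[symmetric])
  finally have 1: "cinner w w = 1" by simp
  have "cinner \<phi> (outer w w *v \<phi>) = cinner w \<phi> * cinner \<phi> w"
    by (simp add: outer_mult_vec cinner_scale_right mult.commute)
  also have "\<dots> = (of_real ?c * cinner \<phi> \<phi>) * (of_real ?c * cinner \<phi> \<phi>)"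
    by (simp only: w_def cinner_scaleR_left cinner_scaleR_right)
  also have "\<dots> = of_real (?c * ?c * (n * n))" by (simp only: cphi of_real_mult mult_ac)
  also have "?c * ?c * (n * n) = n" using np by (simp add: field_simps real_sqrt_mult[symmetric])
  finally show ?thesis using 1 unfolding n_def by auto
qed

lemma cq_form:
  "cinner \<psi> ((\<Sum>i\<in>UNIV. p i *\<^sub>R kron (outer (\<beta> i) (\<beta> i)) (T i)) *v \<psi>)
   = (\<Sum>i\<in>UNIV. of_real (p i) * cinner (pin (\<beta> i) \<psi>) (T i *v pin (\<beta> i) \<psi>))"
  by (simp add: mult_vec_sum_left cinner_sum_right mult_vec_scaleR_left cinner_scaleR_right kron_outer_form)

lemma kron_if_left: "kron (if c then A else 0) B = (if c then kron A B else 0)"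
  by simp

lemma msqrt_cq:
  assumes o: "onb \<beta>" and p: "\<forall>i. 0 \<le> p i" and t: "\<forall>i. density (\<tau> i)"
  shows "msqrt (\<Sum>i\<in>UNIV. p i *\<^sub>R kron (outer (\<beta> i) (\<beta> i)) (\<tau> i))
       = (\<Sum>i\<in>UNIV. sqrt (p i) *\<^sub>R kron (outer (\<beta> i) (\<beta> i)) (msqrt (\<tau> i)))"
proof (rule msqrt_unique)
  have tp: "psd (\<tau> i)" for i using t by (simp add: density_def)
  show "psd (\<Sum>i\<in>UNIV. sqrt (p i) *\<^sub>R kron (outer (\<beta> i) (\<beta> i)) (msqrt (\<tau> i)))"
    using p msqrt_props(1)[OF tp] by (intro psd_sum psd_scaleR psd_kron_outer) auto
  let ?K = "\<lambda>i. kron (outer (\<beta> i) (\<beta> i)) (msqrt (\<tau> i))"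
  have KK: "?K i ** ?K j = (if i = j then kron (outer (\<beta> i) (\<beta> i)) (\<tau> i) else 0)" for i j
    using msqrt_props(2)[OF tp] by (simp add: kron_mult onb_outer_prod[OF o])
  have "(\<Sum>i\<in>UNIV. sqrt (p i) *\<^sub>R ?K i) ** (\<Sum>j\<in>UNIV. sqrt (p j) *\<^sub>R ?K j)
      = (\<Sum>i\<in>UNIV. \<Sum>j\<in>UNIV. (sqrt (p i) * sqrt (p j)) *\<^sub>R (?K j ** ?K i))"
    by (simp add: matrix_mult_sum_left matrix_mult_sum_right matrix_mult_scaleR_left matrix_mult_scaleR_right
        scaleR_sum_right mult.commute)
  also have "\<dots> = (\<Sum>i\<in>UNIV. \<Sum>j\<in>UNIV. (if j = i then p i *\<^sub>R kron (outer (\<beta> i) (\<beta> i)) (\<tau> i) else 0))"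
    by (rule sum.cong[OF refl], rule sum.cong[OF refl]) (use p in \<open>auto simp: KK real_sqrt_mult[symmetric]\<close>)
  also have "\<dots> = (\<Sum>i\<in>UNIV. p i *\<^sub>R kron (outer (\<beta> i) (\<beta> i)) (\<tau> i))"
    by simp
  finally show "(\<Sum>i\<in>UNIV. sqrt (p i) *\<^sub>R ?K i) ** (\<Sum>j\<in>UNIV. sqrt (p j) *\<^sub>R ?K j)
      = (\<Sum>i\<in>UNIV. p i *\<^sub>R kron (outer (\<beta> i) (\<beta> i)) (\<tau> i))" .
qed


lemma eig_form_eq:
  assumes o: "onb \<alpha>" and ev: "\<forall>i. M *v \<alpha> i = of_real (l i) *s \<alpha> i"
  shows "Re (cinner x (M *v x)) = (\<Sum>i\<in>UNIV. l i * (cmod (cinner (\<alpha> i) x))^2)"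
  by (subst spectral_sum[OF o ev]) (simp add: diag_form[OF o])

lemma ptrace_trace: "ctrace (ptrace_b R) = ctrace R"
  by (simp add: ctrace_def ptrace_b_def sum_prod_UNIV)

lemma onb_norm1: "onb \<alpha> \<Longrightarrow> cinner (\<alpha> i) (\<alpha> i) = 1"
  by (simp add: onb_def)

lemma pure_ptrace_herm: "adjoint (ptrace_b (outer \<psi> \<psi>)) = ptrace_b (outer \<psi> \<psi>)"
  by (simp add: adjoint_ptrace adjoint_outer)

lemma pure_ptrace_trace: "cinner \<psi> \<psi> = 1 \<Longrightarrow> ctrace (ptrace_b (outer \<psi> \<psi>)) = 1"
  by (simp add: ptrace_trace ctrace_outer)

lemma pure_eig_facts:
  fixes \<psi> :: "complex^('a::finite \<times> 'b::finite)"
  assumes n: "cinner \<psi> \<psi> = 1" and o: "onb \<alpha>"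
    and ev: "\<forall>i. ptrace_b (outer \<psi> \<psi>) *v \<alpha> i = of_real (l i) *s \<alpha> i"
  shows "\<forall>i. l i = Re (cinner (pin (\<alpha> i) \<psi>) (pin (\<alpha> i) \<psi>))" "\<forall>i. 0 \<le> l i" "(\<Sum>i\<in>UNIV. l i) = 1"
proof -
  have "l i = Re (cinner (pin (\<alpha> i) \<psi>) (pin (\<alpha> i) \<psi>))" for i
  proof -
    have "cinner (\<alpha> i) (ptrace_b (outer \<psi> \<psi>) *v \<alpha> i) = of_real (l i)"
      using ev o by (simp add: cinner_scale_right onb_def)
    then show ?thesis by (simp add: ptrace_pure_form)
  qed
  then show 1: "\<forall>i. l i = Re (cinner (pin (\<alpha> i) \<psi>) (pin (\<alpha> i) \<psi>))" by blast
  show "\<forall>i. 0 \<le> l i" using 1 cinner_self_nonneg by metis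
  show "(\<Sum>i\<in>UNIV. l i) = 1" using eig_trace[OF o ev] pure_ptrace_trace[OF n]
    by (metis of_real_eq_1_iff)
qed

lemma pure_fid:
  fixes \<psi> :: "complex^('a::finite \<times> 'b::finite)"
  assumes n: "cinner \<psi> \<psi> = 1" and o: "onb \<alpha>"
    and ev: "\<forall>i. ptrace_b (outer \<psi> \<psi>) *v \<alpha> i = of_real (l i) *s \<alpha> i"
    and ob: "onb \<beta>" and s: "\<sigma> \<in> cq_states \<beta>"
  shows "\<exists>\<sigma>'\<in>cq_states \<alpha>. 0 \<le> fidelity (outer \<psi> \<psi>) \<sigma> \<and> fidelity (outer \<psi> \<psi>) \<sigma> \<le> fidelity (outer \<psi> \<psi>) \<sigma>'"
proof -
  let ?R = "ptrace_b (outer \<psi> \<psi>)"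
  have lf: "\<forall>i. l i = Re (cinner (pin (\<alpha> i) \<psi>) (pin (\<alpha> i) \<psi>))" using pure_eig_facts[OF n o ev] by blast
  obtain p \<tau> where p: "\<forall>i. 0 \<le> p i" "(\<Sum>i\<in>UNIV. p i) = 1" and t: "\<forall>i. density (\<tau> i)"
    and se: "\<sigma> = (\<Sum>i\<in>UNIV. p i *\<^sub>R kron (outer (\<beta> i) (\<beta> i)) (\<tau> i))"
    using s unfolding cq_states_def by blast
  have sd: "density \<sigma>" using density_cq[OF _ s] ob by (simp add: onb_def)
  then have sp: "psd \<sigma>" by (simp add: density_def)
  obtain m where m: "\<forall>i. l i \<le> l m"
  proof -
    have "Max (range l) \<in> range l" by (intro Max_in) auto
    then obtain m where "l m = Max (range l)" by (metis imageE)
    then have "\<forall>i. l i \<le> l m" by simp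
    then show ?thesis using that by blast
  qed
  have "Re (cinner \<psi> (\<sigma> *v \<psi>)) = (\<Sum>i\<in>UNIV. p i * Re (cinner (pin (\<beta> i) \<psi>) (\<tau> i *v pin (\<beta> i) \<psi>)))"
    unfolding se cq_form by (simp add: Re_sum)
  also have "\<dots> \<le> (\<Sum>i\<in>UNIV. p i * l m)"
  proof (rule sum_mono, rule mult_left_mono)
    fix i
    have "Re (cinner (pin (\<beta> i) \<psi>) (\<tau> i *v pin (\<beta> i) \<psi>)) \<le> Re (cinner (pin (\<beta> i) \<psi>) (pin (\<beta> i) \<psi>))"
      using density_form_le t by blast
    also have "\<dots> = Re (cinner (\<beta> i) (?R *v \<beta> i))" by (simp add: ptrace_pure_form)
    also have "\<dots> \<le> l m * Re (cinner (\<beta> i) (\<beta> i))" using eig_form_le[OF o ev] m by blast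
    also have "\<dots> = l m" using ob by (simp add: onb_def)
    finally show "Re (cinner (pin (\<beta> i) \<psi>) (\<tau> i *v pin (\<beta> i) \<psi>)) \<le> l m" .
  qed (use p in auto)
  also have "\<dots> = l m" using p by (simp flip: sum_distrib_right)
  finally have le: "Re (cinner \<psi> (\<sigma> *v \<psi>)) \<le> l m" .
  obtain w where w: "cinner w w = 1"
    "Re (cinner (pin (\<alpha> m) \<psi>) (outer w w *v pin (\<alpha> m) \<psi>)) = Re (cinner (pin (\<alpha> m) \<psi>) (pin (\<alpha> m) \<psi>))"
    using best_unit by blast
  define q where "q i = (if i = m then 1 else (0::real))" for i
  define \<sigma>' where "\<sigma>' = (\<Sum>i\<in>UNIV. q i *\<^sub>R kron (outer (\<alpha> i) (\<alpha> i)) (outer w w))"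
  have s'cq: "\<sigma>' \<in> cq_states \<alpha>"
    unfolding cq_states_def \<sigma>'_def
    by (rule CollectI, rule exI[of _ q], rule exI[of _ "\<lambda>_. outer w w"]) (simp add: q_def density_outer[OF w(1)])
  have s'd: "density \<sigma>'" using density_cq[OF _ s'cq] o by (simp add: onb_def)
  have "Re (cinner \<psi> (\<sigma>' *v \<psi>)) = (\<Sum>i\<in>UNIV. q i * Re (cinner (pin (\<alpha> i) \<psi>) (outer w w *v pin (\<alpha> i) \<psi>)))"
    unfolding \<sigma>'_def cq_form by (simp add: Re_sum)
  also have "\<dots> = Re (cinner (pin (\<alpha> m) \<psi>) (outer w w *v pin (\<alpha> m) \<psi>))"
  proof -
    have "(\<Sum>i\<in>UNIV. q i * Re (cinner (pin (\<alpha> i) \<psi>) (outer w w *v pin (\<alpha> i) \<psi>)))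
        = (\<Sum>i\<in>UNIV. if i = m then Re (cinner (pin (\<alpha> m) \<psi>) (outer w w *v pin (\<alpha> m) \<psi>)) else 0)"
      by (rule sum.cong) (auto simp: q_def)
    then show ?thesis by simp
  qed
  also have "\<dots> = l m" using w(2) lf by simp
  finally have eq: "Re (cinner \<psi> (\<sigma>' *v \<psi>)) = l m" .
  have "fidelity (outer \<psi> \<psi>) \<sigma> \<le> fidelity (outer \<psi> \<psi>) \<sigma>'"
    using le eq by (simp add: fidelity_pure[OF sp] fidelity_pure s'd[unfolded density_def])
  moreover have "0 \<le> fidelity (outer \<psi> \<psi>) \<sigma>" using psd_form_nonneg[OF sp] by (simp add: fidelity_pure[OF sp])
  ultimately show ?thesis using s'cq by blast
qed


lemma weighted_cs:
  fixes l w :: "'a \<Rightarrow> real"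
  assumes "\<forall>k. 0 \<le> w k"
  shows "(\<Sum>k\<in>S. l k * w k)^2 \<le> (\<Sum>k\<in>S. w k) * (\<Sum>k\<in>S. (l k)^2 * w k)"
proof -
  have "(\<Sum>k\<in>S. l k * w k) = (\<Sum>k\<in>S. sqrt (w k) * (l k * sqrt (w k)))"
    using assms by (intro sum.cong) (auto simp: mult_ac real_sqrt_mult[symmetric])
  then have "(\<Sum>k\<in>S. l k * w k)^2 \<le> (\<Sum>k\<in>S. (sqrt (w k))^2) * (\<Sum>k\<in>S. (l k * sqrt (w k))^2)"
    using Cauchy_Schwarz_ineq_sum by metis
  also have "\<dots> = (\<Sum>k\<in>S. w k) * (\<Sum>k\<in>S. (l k)^2 * w k)"
    using assms by (simp add: power_mult_distrib)
  finally show ?thesis .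
qed

lemma diag_sq_le:
  assumes oa: "onb \<alpha>" and ob: "onb \<beta>" and ev: "\<forall>k. R *v \<alpha> k = of_real (l k) *s \<alpha> k"
  shows "(\<Sum>i\<in>UNIV. (Re (cinner (\<beta> i) (R *v \<beta> i)))^2) \<le> (\<Sum>k\<in>UNIV. (l k)^2)"
proof -
  define w where "w i k = (cmod (cinner (\<alpha> k) (\<beta> i)))^2" for i k
  have w0: "\<forall>k. 0 \<le> w i k" for i by (simp add: w_def)
  have q: "Re (cinner (\<beta> i) (R *v \<beta> i)) = (\<Sum>k\<in>UNIV. l k * w i k)" for i
    unfolding w_def by (rule eig_form_eq[OF oa ev])
  have rowsum: "(\<Sum>k\<in>UNIV. w i k) = 1" for i
    using onb_parseval_self[OF oa, of "\<beta> i"] ob by (simp add: w_def onb_def)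
  have colsum: "(\<Sum>i\<in>UNIV. w i k) = 1" for k
  proof -
    have "(\<Sum>i\<in>UNIV. w i k) = (\<Sum>i\<in>UNIV. (cmod (cinner (\<beta> i) (\<alpha> k)))^2)"
      unfolding w_def by (rule sum.cong) (auto simp: cinner_commute[of "\<alpha> k"])
    also have "\<dots> = 1" using onb_parseval_self[OF ob, of "\<alpha> k"] oa by (simp add: onb_def)
    finally show ?thesis .
  qed
  have "(\<Sum>i\<in>UNIV. (Re (cinner (\<beta> i) (R *v \<beta> i)))^2) \<le> (\<Sum>i\<in>UNIV. \<Sum>k\<in>UNIV. (l k)^2 * w i k)"
  proof (rule sum_mono)
    fix i
    show "(Re (cinner (\<beta> i) (R *v \<beta> i)))^2 \<le> (\<Sum>k\<in>UNIV. (l k)^2 * w i k)"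
      using weighted_cs[OF w0[of i], of l UNIV] unfolding q rowsum by simp
  qed
  also have "\<dots> = (\<Sum>k\<in>UNIV. \<Sum>i\<in>UNIV. (l k)^2 * w i k)" by (rule sum.swap)
  also have "\<dots> = (\<Sum>k\<in>UNIV. (l k)^2)" by (simp add: colsum flip: sum_distrib_left)
  finally show ?thesis .
qed

lemma pure_aff:
  fixes \<psi> :: "complex^('a::finite \<times> 'b::finite)"
  assumes n: "cinner \<psi> \<psi> = 1" and o: "onb \<alpha>"
    and ev: "\<forall>i. ptrace_b (outer \<psi> \<psi>) *v \<alpha> i = of_real (l i) *s \<alpha> i"
    and ob: "onb \<beta>" and s: "\<sigma> \<in> cq_states \<beta>"
  shows "\<exists>\<sigma>'\<in>cq_states \<alpha>. 0 \<le> affinity (outer \<psi> \<psi>) \<sigma> \<and> affinity (outer \<psi> \<psi>) \<sigma> \<le> affinity (outer \<psi> \<psi>) \<sigma>'"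
proof -
  let ?R = "ptrace_b (outer \<psi> \<psi>)"
  have lf: "\<forall>i. l i = Re (cinner (pin (\<alpha> i) \<psi>) (pin (\<alpha> i) \<psi>))" and l0: "\<forall>i. 0 \<le> l i"
    and lsum: "(\<Sum>i\<in>UNIV. l i) = 1" using pure_eig_facts[OF n o ev] by blast+
  obtain p \<tau> where p: "\<forall>i. 0 \<le> p i" "(\<Sum>i\<in>UNIV. p i) = 1" and t: "\<forall>i. density (\<tau> i)"
    and se: "\<sigma> = (\<Sum>i\<in>UNIV. p i *\<^sub>R kron (outer (\<beta> i) (\<beta> i)) (\<tau> i))"
    using s unfolding cq_states_def by blast
  have sd: "density \<sigma>" using density_cq[OF _ s] ob by (simp add: onb_def)
  have rd: "density (outer \<psi> \<psi>)" by (rule density_outer[OF n])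
  define S where "S = (\<Sum>k\<in>UNIV. (l k)^2)"
  define qq where "qq i = Re (cinner (\<beta> i) (?R *v \<beta> i))" for i
  have qq0: "0 \<le> qq i" for i unfolding qq_def by (simp add: ptrace_pure_form cinner_self_nonneg)
  have "affinity (outer \<psi> \<psi>) \<sigma> = Re (cinner \<psi> (msqrt \<sigma> *v \<psi>))" by (rule affinity_pure[OF n])
  also have "\<dots> = (\<Sum>i\<in>UNIV. sqrt (p i) * Re (cinner (pin (\<beta> i) \<psi>) (msqrt (\<tau> i) *v pin (\<beta> i) \<psi>)))"
    unfolding se msqrt_cq[OF ob p(1) t] cq_form by (simp add: Re_sum)
  also have "\<dots> \<le> (\<Sum>i\<in>UNIV. sqrt (p i) * qq i)"
  proof (rule sum_mono, rule mult_left_mono)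
    fix i
    show "Re (cinner (pin (\<beta> i) \<psi>) (msqrt (\<tau> i) *v pin (\<beta> i) \<psi>)) \<le> qq i"
      using sqrt_density_form_le t unfolding qq_def ptrace_pure_form by blast
  qed (use p in simp)
  finally have a1: "affinity (outer \<psi> \<psi>) \<sigma> \<le> (\<Sum>i\<in>UNIV. sqrt (p i) * qq i)" .
  have "(\<Sum>i\<in>UNIV. sqrt (p i) * qq i)^2 \<le> (\<Sum>i\<in>UNIV. (sqrt (p i))^2) * (\<Sum>i\<in>UNIV. (qq i)^2)"
    by (rule Cauchy_Schwarz_ineq_sum)
  also have "\<dots> = (\<Sum>i\<in>UNIV. (qq i)^2)" using p by simp
  also have "\<dots> \<le> S" unfolding qq_def S_def by (rule diag_sq_le[OF o ob ev])
  finally have "(\<Sum>i\<in>UNIV. sqrt (p i) * qq i)^2 \<le> S" .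
  then have a2: "(\<Sum>i\<in>UNIV. sqrt (p i) * qq i) \<le> sqrt S" using real_le_rsqrt by blast
  have a0: "0 \<le> affinity (outer \<psi> \<psi>) \<sigma>" using affinity_bounds[OF rd sd] by blast
  have Spos: "S > 0"
  proof (rule ccontr)
    assume "\<not> S > 0"
    moreover have "S \<ge> 0" unfolding S_def by (simp add: sum_nonneg)
    ultimately have "S = 0" by simp
    then have "\<forall>k\<in>UNIV. (l k)^2 = 0" unfolding S_def by (subst (asm) sum_nonneg_eq_0_iff) auto
    then have "\<forall>k. l k = 0" by simp
    then show False using lsum by simp
  qed
  have "\<forall>k. \<exists>w. cinner w w = 1 \<and> Re (cinner (pin (\<alpha> k) \<psi>) (outer w w *v pin (\<alpha> k) \<psi>)) = Re (cinner (pin (\<alpha> k) \<psi>) (pin (\<alpha> k) \<psi>))"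
    using best_unit by blast
  then obtain w where w: "\<forall>k. cinner (w k) (w k) = 1"
    "\<forall>k. Re (cinner (pin (\<alpha> k) \<psi>) (outer (w k) (w k) *v pin (\<alpha> k) \<psi>)) = l k"
    using lf by (auto dest!: choice)
  define pp where "pp k = (l k)^2 / S" for k
  define \<sigma>' where "\<sigma>' = (\<Sum>k\<in>UNIV. pp k *\<^sub>R kron (outer (\<alpha> k) (\<alpha> k)) (outer (w k) (w k)))"
  have pp0: "\<forall>k. 0 \<le> pp k" using Spos by (simp add: pp_def)
  have ppsum: "(\<Sum>k\<in>UNIV. pp k) = 1" using Spos by (simp add: pp_def S_def flip: sum_divide_distrib)
  have wd: "\<forall>k. density (outer (w k) (w k))" using w(1) by (simp add: density_outer)
  have s'cq: "\<sigma>' \<in> cq_states \<alpha>"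
    unfolding cq_states_def \<sigma>'_def
    by (rule CollectI, rule exI[of _ pp], rule exI[of _ "\<lambda>k. outer (w k) (w k)"]) (use pp0 ppsum wd in simp)
  have "affinity (outer \<psi> \<psi>) \<sigma>' = Re (cinner \<psi> (msqrt \<sigma>' *v \<psi>))" by (rule affinity_pure[OF n])
  also have "\<dots> = (\<Sum>k\<in>UNIV. sqrt (pp k) * Re (cinner (pin (\<alpha> k) \<psi>) (msqrt (outer (w k) (w k)) *v pin (\<alpha> k) \<psi>)))"
    unfolding \<sigma>'_def msqrt_cq[OF o pp0 wd] cq_form by (simp add: Re_sum)
  also have "\<dots> = (\<Sum>k\<in>UNIV. sqrt (pp k) * l k)"
    using w by (simp add: msqrt_pure)
  also have "\<dots> = (\<Sum>k\<in>UNIV. (l k)^2 / sqrt S)"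
  proof (rule sum.cong[OF refl])
    fix k
    have "sqrt (pp k) = l k / sqrt S" using l0 Spos by (simp add: pp_def real_sqrt_divide)
    then show "sqrt (pp k) * l k = (l k)^2 / sqrt S" by (simp add: power2_eq_square)
  qed
  also have "\<dots> = S / sqrt S" by (simp add: S_def sum_divide_distrib)
  also have "\<dots> = sqrt S" using Spos by (simp add: real_div_sqrt)
  finally have "affinity (outer \<psi> \<psi>) \<sigma>' = sqrt S" .
  then have "affinity (outer \<psi> \<psi>) \<sigma> \<le> affinity (outer \<psi> \<psi>) \<sigma>'" using a1 a2 by linarith
  then show ?thesis using a0 s'cq by blast
qed


lemma axis_onb: "onb (\<lambda>i::'a::finite. axis i (1::complex))"
proof -
  have "cinner (axis i (1::complex)) (axis j 1) = (if i = j then 1 else 0)" for i j :: 'a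
  proof -
    have "cinner (axis i (1::complex)) (axis j 1) = (\<Sum>k\<in>UNIV. if k = i \<and> k = j then 1 else 0)"
      unfolding cinner_def axis_def by (rule sum.cong) auto
    moreover have "(\<Sum>k\<in>(UNIV::'a set). if k = i \<and> k = j then (1::complex) else 0) = (if i = j then 1 else 0)"
    proof (cases "i = j")
      case False
      then show ?thesis by (simp, intro sum.neutral) auto
    qed simp
    ultimately show ?thesis by simp
  qed
  then show ?thesis by (simp add: onb_def)
qed

lemma cq_nonempty: "cq_states (\<alpha>::'a::finite \<Rightarrow> complex^'a) \<noteq> ({} :: ('a \<times> 'b::finite) cmat set)"
proof -
  define e where "e = axis (undefined::'b) (1::complex)"
  have d: "density (outer e e)" unfolding e_def by (rule density_outer[OF axis_unit])
  let ?p = "\<lambda>i::'a. 1 / real CARD('a)"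
  have "(\<Sum>i\<in>UNIV. ?p i *\<^sub>R kron (outer (\<alpha> i) (\<alpha> i)) (outer e e)) \<in> (cq_states \<alpha> :: ('a \<times> 'b) cmat set)"
    unfolding cq_states_def
    by (rule CollectI, rule exI[of _ ?p], rule exI[of _ "\<lambda>_. outer e e"]) (simp add: d)
  then show ?thesis by blast
qed

lemma eigen_onb_iff: "eigen_onb A \<alpha> \<longleftrightarrow> onb \<alpha> \<and> (\<forall>i. \<exists>c. A *v \<alpha> i = c *s \<alpha> i)"
  by (simp add: eigen_onb_def vector_scalar_mult_def)

theorem theorem9:
  fixes \<rho> :: "('a::finite \<times> 'b::finite) cmat"
    and X :: "('a \<times> 'b) cmat \<Rightarrow> ('a \<times> 'b) cmat \<Rightarrow> real"
  assumes "X = fidelity \<or> X = affinity"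
    and "density \<rho>"
  shows "C_cc X \<rho> \<ge> D_disc X \<rho> \<and>
         ((ptrace_b \<rho> = (1 / real CARD('a)) *\<^sub>R mat 1 \<or> pure_state \<rho>) \<longrightarrow> C_cc X \<rho> = D_disc X \<rho>)"
proof -
  let ?N = "real CARD('a \<times> 'b)"
  define f where "f \<sigma> = dX X \<rho> \<sigma>" for \<sigma>
  define U where "U = (\<Union>\<alpha>\<in>{\<alpha>. onb \<alpha>}. (cq_states \<alpha> :: ('a \<times> 'b) cmat set))"
  define E where "E = {\<alpha>. eigen_onb (ptrace_b \<rho>) \<alpha>}"
  have Xb: "0 \<le> X \<rho> \<sigma> \<and> X \<rho> \<sigma> \<le> ?N" if "density \<sigma>" for \<sigma>
    using assms(1) fidelity_bounds[OF assms(2) that] affinity_bounds[OF assms(2) that] by auto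
  have fb: "1 - ?N^2 \<le> f \<sigma>" if "density \<sigma>" for \<sigma>
  proof -
    have "(X \<rho> \<sigma>)^2 \<le> ?N^2" using Xb[OF that] by (intro power_mono) auto
    then show ?thesis by (simp add: f_def dX_def)
  qed
  have Ud: "density \<sigma>" if sU: "\<sigma> \<in> U" for \<sigma>
  proof -
    obtain \<alpha> where "onb \<alpha>" "\<sigma> \<in> cq_states \<alpha>" using sU unfolding U_def by blast
    then show ?thesis by (intro density_cq[of \<alpha>]) (auto simp: onb_def)
  qed
  have bddU: "bdd_below (f ` U)" using fb Ud by (intro bdd_belowI[of _ "1 - ?N^2"]) auto
  have bddcq: "bdd_below (f ` cq_states \<alpha>)" if oa: "onb \<alpha>" for \<alpha>
  proof (rule bdd_below_mono[OF bddU])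
    show "f ` cq_states \<alpha> \<subseteq> f ` U" using oa unfolding U_def by blast
  qed
  have Cb_eq: "C_basis X \<alpha> \<rho> = (INF \<sigma>\<in>cq_states \<alpha>. f \<sigma>)" for \<alpha> by (simp add: C_basis_def f_def)
  have Ccc_eq: "C_cc X \<rho> = (INF \<alpha>\<in>E. C_basis X \<alpha> \<rho>)" by (simp add: C_cc_def E_def)
  have D_eq: "D_disc X \<rho> = (INF \<sigma>\<in>U. f \<sigma>)" by (simp add: D_disc_def U_def f_def)
  have Eonb: "onb \<alpha>" if "\<alpha> \<in> E" for \<alpha> using that by (simp add: E_def eigen_onb_def)
  have herm: "adjoint (ptrace_b \<rho>) = ptrace_b \<rho>"
    using assms(2) by (simp add: adjoint_ptrace density_def psd_def)
  obtain \<alpha>0 l where o0: "onb \<alpha>0" and ev0: "\<forall>i. ptrace_b \<rho> *v \<alpha>0 i = of_real (l i) *s \<alpha>0 i"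
    using hermitian_spectral[OF herm] by blast
  have a0E: "\<alpha>0 \<in> E" using o0 ev0 by (auto simp: E_def eigen_onb_iff)
  then have Ene: "E \<noteq> {}" by blast
  have Cb_lb: "1 - ?N^2 \<le> C_basis X \<alpha> \<rho>" if oa: "onb \<alpha>" for \<alpha>
    unfolding Cb_eq
  proof (rule cINF_greatest[OF cq_nonempty])
    fix \<sigma> :: "('a \<times> 'b) cmat" assume "\<sigma> \<in> cq_states \<alpha>"
    then have "\<sigma> \<in> U" using oa unfolding U_def by blast
    then show "1 - ?N^2 \<le> f \<sigma>" by (intro fb Ud)
  qed
  have bddE: "bdd_below ((\<lambda>\<alpha>. C_basis X \<alpha> \<rho>) ` E)"
    using Cb_lb Eonb by (intro bdd_belowI[of _ "1 - ?N^2"]) auto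
  have part1: "D_disc X \<rho> \<le> C_cc X \<rho>"
    unfolding Ccc_eq
  proof (rule cINF_greatest[OF Ene])
    fix \<alpha> assume aE: "\<alpha> \<in> E"
    show "D_disc X \<rho> \<le> C_basis X \<alpha> \<rho>"
      unfolding Cb_eq
    proof (rule cINF_greatest[OF cq_nonempty])
      fix \<sigma> :: "('a \<times> 'b) cmat" assume "\<sigma> \<in> cq_states \<alpha>"
      then have "\<sigma> \<in> U" using Eonb[OF aE] by (auto simp: U_def)
      then show "D_disc X \<rho> \<le> f \<sigma>" unfolding D_eq by (rule cINF_lower[OF bddU])
    qed
  qed
  moreover have "C_cc X \<rho> = D_disc X \<rho>" if h: "ptrace_b \<rho> = (1 / real CARD('a)) *\<^sub>R mat 1 \<or> pure_state \<rho>"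
    using h
  proof
    assume mm: "ptrace_b \<rho> = (1 / real CARD('a)) *\<^sub>R mat 1"
    have "E = {\<alpha>. onb \<alpha>}"
    proof -
      have "(ptrace_b \<rho>) *v v = of_real (1 / real CARD('a)) *s v" for v
        unfolding mm by (simp add: mult_vec_scaleR_left scaleR_as_scale)
      then show ?thesis by (auto simp: E_def eigen_onb_iff)
    qed
    then have "C_cc X \<rho> = (INF \<alpha>\<in>{\<alpha>. onb \<alpha>}. INF \<sigma>\<in>cq_states \<alpha>. f \<sigma>)" by (simp add: Ccc_eq Cb_eq)
    also have "\<dots> = (INF \<sigma>\<in>U. f \<sigma>)" unfolding U_def
    proof (rule cINF_UNION[symmetric])
      show "{\<alpha>. onb \<alpha>} \<noteq> {}" using axis_onb by blast
      show "\<And>\<alpha>. \<alpha> \<in> {\<alpha>. onb \<alpha>} \<Longrightarrow> cq_states \<alpha> \<noteq> {}" by (rule cq_nonempty)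
      show "bdd_below (\<Union>\<alpha>\<in>{\<alpha>. onb \<alpha>}. f ` cq_states \<alpha>)" using bddU by (simp add: U_def image_UN)
    qed
    finally show ?thesis using D_eq by simp
  next
    assume "pure_state \<rho>"
    then obtain \<psi> where n: "cinner \<psi> \<psi> = 1" and re: "\<rho> = outer \<psi> \<psi>" by (auto simp: pure_state_def)
    have ev: "\<forall>i. ptrace_b (outer \<psi> \<psi>) *v \<alpha>0 i = of_real (l i) *s \<alpha>0 i" using ev0 re by simp
    have Une: "U \<noteq> {}" using axis_onb cq_nonempty unfolding U_def by blast
    have "C_cc X \<rho> \<le> D_disc X \<rho>"
      unfolding D_eq
    proof (rule cINF_greatest[OF Une])
      fix \<sigma> :: "('a \<times> 'b) cmat" assume "\<sigma> \<in> U"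
      then obtain \<beta> where ob: "onb \<beta>" and s: "\<sigma> \<in> cq_states \<beta>" by (auto simp: U_def)
      obtain \<sigma>' where s': "\<sigma>' \<in> cq_states \<alpha>0" and X0: "0 \<le> X \<rho> \<sigma>" and Xle: "X \<rho> \<sigma> \<le> X \<rho> \<sigma>'"
        using assms(1) pure_fid[OF n o0 ev ob s] pure_aff[OF n o0 ev ob s] re by auto
      have "f \<sigma>' \<le> f \<sigma>"
      proof -
        have "(X \<rho> \<sigma>)^2 \<le> (X \<rho> \<sigma>')^2" using X0 Xle by (intro power_mono) auto
        then show ?thesis by (simp add: f_def dX_def)
      qed
      have "C_cc X \<rho> \<le> C_basis X \<alpha>0 \<rho>" unfolding Ccc_eq by (rule cINF_lower[OF bddE a0E])
      also have "\<dots> \<le> f \<sigma>'" unfolding Cb_eq by (rule cINF_lower[OF bddcq[OF o0] s'])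
      also have "\<dots> \<le> f \<sigma>" by fact
      finally show "C_cc X \<rho> \<le> f \<sigma>" .
    qed
    then show ?thesis using part1 by simp
  qed
  ultimately show ?thesis by blast
qed


end
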